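(* Let $(S,V)$ be a complete semiring-semimodule pair, let $n\ge1$, let $\Gamma$ be an alphabet, and let $M\in (S^{n\times n})^{\Gamma^*\times\Gamma^*}$ be a pushdown transition matrix. Then for all $p\in\Gamma$ and $0\le l\le n$, $$(M^{\omega,l})_p=\sum_{p'\in\Gamma}(A_M)_{p,p'}\,(M^{\omega,l})_{p'}.$$
   Context: A complete semiring-semimodule pair $(S,V)$ (in the sense of Ésik and Kuich, "Modern Automata Theory") consists of a complete starsemiring $S$ (arbitrary sums with infinite associativity/commutativity/distributivity laws, star $s^*=\sum_{j\ge0}s^j$) and a complete $S$-semimodule $V$, with infinite products $\prod_{j\ge1}s_j\in V$ of sequences in $S$ satisfying the axioms of that framework. $M\in (S^{n\times n})^{\Gamma^*\times\Gamma^*}$ (a $\Gamma^*\times\Gamma^*$ matrix with $n\times n$ blocks over $S$) is a pushdown transition matrix if (i) for each $p\in\Gamma$ only finitely many blocks $M_{p,\pi}$ are nonzero, and (ii) $M_{\pi_1,\pi_2}=M_{p,\pi}$ if $\pi_1=p\pi'$, $\pi_2=\pi\pi'$ for some $p\in\Gamma$, $\pi,\pi'\in\Gamma^*$, and $0$ otherwise. $M^*=\sum_{m\ge0}M^m$ with blocks $(M^* )_{\pi,\pi'}$. Let $P_l=\{(j_1,j_2,\dots)\in\{1,\dots,n\}^\omega\mid j_t\le l\text{ for infinitely many }t\}$; $M^{\omega,l}\in (V^n)^{\Gamma^*}$ is given by $((M^{\omega,l})_\pi)_i=\sum_{\pi_1,\pi_2,\ldots\in\Gamma^*}\sum_{(j_1,j_2,\ldots)\in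 P_l}(M_{\pi,\pi_1})_{i,j_1}(M_{\pi_1,\pi_2})_{j_1,j_2}\cdots$ (sum of weights of infinite paths from $(\pi,i)$ visiting states $\le l$ infinitely often). For $p,p'\in\Gamma$, $$(A_M)_{p,p'}=\sum_{\substack{\pi=p_1\dots p_k\in\Gamma^+,\ 1\le j\le k\\ p_j=p'}}M_{p,\pi}\,(M^* )_{p_1,\epsilon}\cdots(M^* )_{p_{j-1},\epsilon}\in S^{n\times n}.$$ *)

theory Defs
  imports Main "HOL-Library.Countable"
begin

text \<open>Complete sums are taken over families indexed by subsets of a fixed index
  type ix (of the cardinality of the continuum).\<close>

type_synonym ix = "nat \<Rightarrow> nat"

definition seq_enc :: "(nat \<Rightarrow> ix) \<Rightarrow> ix" where
  "seq_enc \<sigma> = (\<lambda>k. \<sigma> (fst (prod_decode k)) (snd (prod_decode k)))"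

definition seq_dec :: "ix \<Rightarrow> nat \<Rightarrow> ix" where
  "seq_dec x j = (\<lambda>m. x (prod_encode (j, m)))"

definition complete_monoid :: "((ix \<Rightarrow> 'a::comm_monoid_add) \<Rightarrow> ix set \<Rightarrow> 'a) \<Rightarrow> bool" where
  "complete_monoid cs \<longleftrightarrow>
     (\<forall>f g I. (\<forall>i\<in>I. f i = g i) \<longrightarrow> cs f I = cs g I) \<and>
     (\<forall>f. cs f {} = 0) \<and>
     (\<forall>f j. cs f {j} = f j) \<and>
     (\<forall>f j k. j \<noteq> k \<longrightarrow> cs f {j, k} = f j + f k) \<and>
     (\<forall>f (I :: ix \<Rightarrow> ix set) J.
        (\<forall>j\<in>J. \<forall>j'\<in>J. j \<noteq> j' \<longrightarrow> I j \<inter> I j' = {}) \<longrightarrow>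
        cs f (\<Union>j\<in>J. I j) = cs (\<lambda>j. cs f (I j)) J)"

definition complete_semiring :: "((ix \<Rightarrow> 'a::semiring_1) \<Rightarrow> ix set \<Rightarrow> 'a) \<Rightarrow> bool" where
  "complete_semiring cs \<longleftrightarrow> complete_monoid cs \<and>
     (\<forall>a f I. a * cs f I = cs (\<lambda>i. a * f i) I) \<and>
     (\<forall>a f I. cs f I * a = cs (\<lambda>i. f i * a) I)"

definition complete_semimodule ::
  "((ix \<Rightarrow> 's::semiring_1) \<Rightarrow> ix set \<Rightarrow> 's) \<Rightarrow> ((ix \<Rightarrow> 'v::comm_monoid_add) \<Rightarrow> ix set \<Rightarrow> 'v)
   \<Rightarrow> ('s \<Rightarrow> 'v \<Rightarrow> 'v) \<Rightarrow> bool" where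
  "complete_semimodule csS csV smult \<longleftrightarrow> complete_monoid csV \<and>
     (\<forall>s v w. smult s (v + w) = smult s v + smult s w) \<and>
     (\<forall>s t v. smult (s + t) v = smult s v + smult t v) \<and>
     (\<forall>s t v. smult (s * t) v = smult s (smult t v)) \<and>
     (\<forall>v. smult 1 v = v) \<and>
     (\<forall>v. smult 0 v = 0) \<and>
     (\<forall>s. smult s 0 = 0) \<and>
     (\<forall>s f I. smult s (csV f I) = csV (\<lambda>i. smult s (f i)) I) \<and>
     (\<forall>f I v. smult (csS f I) v = csV (\<lambda>i. smult (f i) v) I)"

text \<open>Complete semiring-semimodule pair (Esik-Kuich): infprod s is the
  infinite product of the sequence s 0, s 1, s 2, ...\<close>
definition complete_ssp ::
  "((ix \<Rightarrow> 's::semiring_1) \<Rightarrow> ix set \<Rightarrow> 's) \<Rightarrow> ((ix \<Rightarrow> 'v::comm_monoid_add) \<Rightarrow> ix set \<Rightarrow> 'v)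
   \<Rightarrow> ('s \<Rightarrow> 'v \<Rightarrow> 'v) \<Rightarrow> ((nat \<Rightarrow> 's) \<Rightarrow> 'v) \<Rightarrow> bool" where
  "complete_ssp csS csV smult infprod \<longleftrightarrow>
     complete_semiring csS \<and> complete_semimodule csS csV smult \<and>
     (\<forall>s. infprod s = smult (s 0) (infprod (\<lambda>j. s (Suc j)))) \<and>
     (\<forall>s (ns :: nat \<Rightarrow> nat). strict_mono ns \<and> ns 0 = 0 \<longrightarrow>
        infprod s = infprod (\<lambda>j. prod_list (map s [ns j..<ns (Suc j)]))) \<and>
     (\<forall>(s :: nat \<Rightarrow> ix \<Rightarrow> 's) (I :: nat \<Rightarrow> ix set).
        infprod (\<lambda>j. csS (s j) (I j)) =
        csV (\<lambda>x. infprod (\<lambda>j. s j (seq_dec x j))) (seq_enc ` {\<sigma>. \<forall>j. \<sigma> j \<in> I j}))"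

definition cenc :: "'c::countable \<Rightarrow> ix" where
  "cenc x = (\<lambda>_. to_nat x)"

definition Csum :: "((ix \<Rightarrow> 'a) \<Rightarrow> ix set \<Rightarrow> 'a) \<Rightarrow> ('c::countable \<Rightarrow> 'a) \<Rightarrow> 'c set \<Rightarrow> 'a" where
  "Csum cs f A = cs (\<lambda>i. f (from_nat (i 0))) (cenc ` A)"

definition senc :: "(nat \<Rightarrow> 'c::countable) \<Rightarrow> ix" where
  "senc \<sigma> = (\<lambda>k. to_nat (\<sigma> k))"

definition Ssum :: "((ix \<Rightarrow> 'a) \<Rightarrow> ix set \<Rightarrow> 'a) \<Rightarrow> ((nat \<Rightarrow> 'c::countable) \<Rightarrow> 'a)
   \<Rightarrow> (nat \<Rightarrow> 'c) set \<Rightarrow> 'a" where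
  "Ssum cs f A = cs (\<lambda>i. f (\<lambda>k. from_nat (i k))) (senc ` A)"

text \<open>A \<Gamma>*\<times>\<Gamma>* matrix with n\<times>n blocks over S is represented as
  M :: 'g list \<Rightarrow> 'g list \<Rightarrow> nat \<Rightarrow> nat \<Rightarrow> 's, where M \<pi>1 \<pi>2 i j is the (i,j) entry
  (1 \<le> i, j \<le> n) of the block M_{\<pi>1,\<pi>2}. The alphabet \<Gamma> is the finite type 'g.\<close>

definition pushdown_tm :: "nat \<Rightarrow> ('g::finite list \<Rightarrow> 'g list \<Rightarrow> nat \<Rightarrow> nat \<Rightarrow> 's::semiring_1) \<Rightarrow> bool" where
  "pushdown_tm n M \<longleftrightarrow>
     (\<forall>p. finite {\<pi>. \<exists>i\<in>{1..n}. \<exists>j\<in>{1..n}. M [p] \<pi> i j \<noteq> 0}) \<and>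
     (\<forall>p \<pi> \<pi>'. \<forall>i\<in>{1..n}. \<forall>j\<in>{1..n}. M (p # \<pi>') (\<pi> @ \<pi>') i j = M [p] \<pi> i j) \<and>
     (\<forall>\<pi>1 \<pi>2. (\<nexists>p \<pi> \<pi>'. \<pi>1 = p # \<pi>' \<and> \<pi>2 = \<pi> @ \<pi>') \<longrightarrow>
        (\<forall>i\<in>{1..n}. \<forall>j\<in>{1..n}. M \<pi>1 \<pi>2 i j = 0))"

fun mpow :: "((ix \<Rightarrow> 's::semiring_1) \<Rightarrow> ix set \<Rightarrow> 's) \<Rightarrow> nat
   \<Rightarrow> ('g::finite list \<Rightarrow> 'g list \<Rightarrow> nat \<Rightarrow> nat \<Rightarrow> 's) \<Rightarrow> nat
   \<Rightarrow> 'g list \<Rightarrow> 'g list \<Rightarrow> nat \<Rightarrow> nat \<Rightarrow> 's" where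
  "mpow cs n M 0 \<pi> \<pi>' i j = (if \<pi> = \<pi>' \<and> i = j then 1 else 0)"
| "mpow cs n M (Suc m) \<pi> \<pi>' i j =
     Csum cs (\<lambda>(\<rho>, k). M \<pi> \<rho> i k * mpow cs n M m \<rho> \<pi>' k j) (UNIV \<times> {1..n})"

definition mstar :: "((ix \<Rightarrow> 's::semiring_1) \<Rightarrow> ix set \<Rightarrow> 's) \<Rightarrow> nat
   \<Rightarrow> ('g::finite list \<Rightarrow> 'g list \<Rightarrow> nat \<Rightarrow> nat \<Rightarrow> 's)
   \<Rightarrow> 'g list \<Rightarrow> 'g list \<Rightarrow> nat \<Rightarrow> nat \<Rightarrow> 's" where
  "mstar cs n M \<pi> \<pi>' i j = Csum cs (\<lambda>m. mpow cs n M m \<pi> \<pi>' i j) (UNIV :: nat set)"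

definition mmul :: "nat \<Rightarrow> (nat \<Rightarrow> nat \<Rightarrow> 's::semiring_1) \<Rightarrow> (nat \<Rightarrow> nat \<Rightarrow> 's) \<Rightarrow> nat \<Rightarrow> nat \<Rightarrow> 's" where
  "mmul n A B i j = (\<Sum>k\<in>{1..n}. A i k * B k j)"

definition mone :: "nat \<Rightarrow> nat \<Rightarrow> 's::semiring_1" where
  "mone i j = (if i = j then 1 else 0)"

definition mprod :: "nat \<Rightarrow> (nat \<Rightarrow> nat \<Rightarrow> 's::semiring_1) list \<Rightarrow> nat \<Rightarrow> nat \<Rightarrow> 's" where
  "mprod n As = foldr (mmul n) As mone"

text \<open>(A_M)_{p,p'} = sum over \<pi> = p_1...p_k \<in> \<Gamma>^+ and 1 \<le> j \<le> k with p_j = p' of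
  M_{p,\<pi>} (M^*)_{p_1,\<epsilon>} ... (M^*)_{p_{j-1},\<epsilon>}.\<close>
definition AM :: "((ix \<Rightarrow> 's::semiring_1) \<Rightarrow> ix set \<Rightarrow> 's) \<Rightarrow> nat
   \<Rightarrow> ('g::finite list \<Rightarrow> 'g list \<Rightarrow> nat \<Rightarrow> nat \<Rightarrow> 's) \<Rightarrow> 'g \<Rightarrow> 'g \<Rightarrow> nat \<Rightarrow> nat \<Rightarrow> 's" where
  "AM cs n M p p' i j =
     Csum cs (\<lambda>(\<pi>, t). mprod n (M [p] \<pi> # map (\<lambda>q. mstar cs n M [q] []) (take (t - 1) \<pi>)) i j)
       {(\<pi>, t). \<pi> \<noteq> [] \<and> 1 \<le> t \<and> t \<le> length \<pi> \<and> \<pi> ! (t - 1) = p'}"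

text \<open>Infinite paths: \<sigma> t = (\<pi>_{t+1}, j_{t+1}); the weight sequence starting at (\<pi>, i).\<close>
definition path_weight :: "('g list \<Rightarrow> 'g list \<Rightarrow> nat \<Rightarrow> nat \<Rightarrow> 's)
   \<Rightarrow> 'g list \<Rightarrow> nat \<Rightarrow> (nat \<Rightarrow> 'g list \<times> nat) \<Rightarrow> nat \<Rightarrow> 's" where
  "path_weight M \<pi> i \<sigma> t =
     (if t = 0 then M \<pi> (fst (\<sigma> 0)) i (snd (\<sigma> 0))
      else M (fst (\<sigma> (t - 1))) (fst (\<sigma> t)) (snd (\<sigma> (t - 1))) (snd (\<sigma> t)))"

text \<open>((M^{\<omega>,l})_\<pi>)_i: sum of weights of infinite paths from (\<pi>, i) whose state
  sequence lies in P_l.\<close>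
definition momega :: "((ix \<Rightarrow> 'v) \<Rightarrow> ix set \<Rightarrow> 'v) \<Rightarrow> ((nat \<Rightarrow> 's) \<Rightarrow> 'v) \<Rightarrow> nat
   \<Rightarrow> ('g::finite list \<Rightarrow> 'g list \<Rightarrow> nat \<Rightarrow> nat \<Rightarrow> 's) \<Rightarrow> nat \<Rightarrow> 'g list \<Rightarrow> nat \<Rightarrow> 'v" where
  "momega csV infprod n M l \<pi> i =
     Ssum csV (\<lambda>\<sigma>. infprod (path_weight M \<pi> i \<sigma>))
       {\<sigma>. (\<forall>t. snd (\<sigma> t) \<in> {1..n}) \<and> infinite {t. snd (\<sigma> t) \<le> l}}"

end

theory Submission
  imports Defs
begin

definition esum :: "((ix \<Rightarrow> 'a) \<Rightarrow> ix set \<Rightarrow> 'a) \<Rightarrow> ('b \<Rightarrow> ix) \<Rightarrow> ('b \<Rightarrow> 'a) \<Rightarrow> 'b set \<Rightarrow> 'a" where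
  "esum cs e f A = cs (\<lambda>i. f (inv_into A e i)) (e ` A)"

lemma cm_D1: "complete_monoid cs \<Longrightarrow> \<forall>f g I. (\<forall>i\<in>I. f i = g i) \<longrightarrow> cs f I = cs g I"
  unfolding complete_monoid_def by (erule conjunct1)
lemma cm_D2: "complete_monoid cs \<Longrightarrow> \<forall>f. cs f {} = 0"
  unfolding complete_monoid_def by (drule conjunct2, erule conjunct1)
lemma cm_D3: "complete_monoid cs \<Longrightarrow> \<forall>f j. cs f {j} = f j"
  unfolding complete_monoid_def by (drule conjunct2, drule conjunct2, erule conjunct1)
lemma cm_D4: "complete_monoid cs \<Longrightarrow> \<forall>f j k. j \<noteq> k \<longrightarrow> cs f {j, k} = f j + f k"
  unfolding complete_monoid_def by (drule conjunct2, drule conjunct2, drule conjunct2, erule conjunct1)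
lemma cm_D5: "complete_monoid cs \<Longrightarrow> \<forall>f (I :: ix \<Rightarrow> ix set) J.
        (\<forall>j\<in>J. \<forall>j'\<in>J. j \<noteq> j' \<longrightarrow> I j \<inter> I j' = {}) \<longrightarrow>
        cs f (\<Union>j\<in>J. I j) = cs (\<lambda>j. cs f (I j)) J"
  unfolding complete_monoid_def by (drule conjunct2, drule conjunct2, drule conjunct2, erule conjunct2)

lemma cm_cong: "complete_monoid cs \<Longrightarrow> (\<And>i. i \<in> I \<Longrightarrow> f i = g i) \<Longrightarrow> cs f I = cs g I"
  using cm_D1 by metis

lemma cm_empty: "complete_monoid cs \<Longrightarrow> cs f {} = 0"
  using cm_D2 by metis

lemma cm_single: "complete_monoid cs \<Longrightarrow> cs f {j} = f j"
  using cm_D3 by metis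

lemma cm_pair: "complete_monoid cs \<Longrightarrow> j \<noteq> k \<Longrightarrow> cs f {j, k} = f j + f k"
  using cm_D4 by metis

lemma cm_part: assumes "complete_monoid cs" "(\<And>j j'. j \<in> J \<Longrightarrow> j' \<in> J \<Longrightarrow> j \<noteq> j' \<Longrightarrow> I j \<inter> I j' = {})"
   shows "cs f (\<Union>j\<in>J. I j) = cs (\<lambda>j. cs f (I j)) J"
  using cm_D5[OF assms(1), rule_format, of J I f] assms(2) by blast

lemma cm_zero: assumes cm: "complete_monoid cs" and z: "\<And>i. i \<in> I \<Longrightarrow> f i = 0"
  shows "cs f I = 0"
proof -
  have "cs f (\<Union>j\<in>I. {}) = cs (\<lambda>j. cs f {}) I"
    by (rule cm_part[OF cm]) auto
  hence "cs (\<lambda>j. cs f {}) I = 0" using cm_empty[OF cm] by simp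
  hence "cs (\<lambda>j. 0) I = 0" using cm_empty[OF cm, of f] by simp
  thus ?thesis using cm_cong[OF cm, of I f "\<lambda>_. 0"] z by simp
qed

lemma cm_reindex: assumes cm: "complete_monoid cs" and inj: "inj_on h A"
  shows "cs f (h ` A) = cs (\<lambda>i. f (h i)) A"
proof -
  have "h ` A = (\<Union>j\<in>A. {h j})" by auto
  hence "cs f (h ` A) = cs (\<lambda>j. cs f {h j}) A"
    using cm_part[OF cm, of A "\<lambda>j. {h j}" f] inj by (auto dest: inj_onD)
  also have "\<dots> = cs (\<lambda>i. f (h i)) A" using cm_single[OF cm] by simp
  finally show ?thesis .
qed

definition tag :: "nat \<Rightarrow> ix \<Rightarrow> ix" where
  "tag b i = (\<lambda>k. case k of 0 \<Rightarrow> b | Suc k' \<Rightarrow> i k')"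

lemma tag_inj: "tag b i = tag b' i' \<longleftrightarrow> b = b' \<and> i = i'"
proof
  assume h: "tag b i = tag b' i'"
  have "b = b'" using fun_cong[OF h, of 0] by (simp add: tag_def)
  moreover have "i = i'"
  proof
    fix k show "i k = i' k" using fun_cong[OF h, of "Suc k"] by (simp add: tag_def)
  qed
  ultimately show "b = b' \<and> i = i'" by simp
qed simp

lemma cm_add: assumes cm: "complete_monoid cs"
  shows "cs (\<lambda>i. f i + g i) I = cs f I + cs g I"
proof -
  define H where "H j = (if j 0 = 0 then f (\<lambda>k. j (Suc k)) else g (\<lambda>k. j (Suc k)))" for j :: ix
  define T where "T = (\<Union>i\<in>I. {tag 0 i, tag 1 i})"
  have untag: "(\<lambda>k. tag b i (Suc k)) = i" for b i by (simp add: tag_def)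
  have tag0: "tag b i 0 = b" for b i by (simp add: tag_def)
  have "cs H T = cs (\<lambda>i. cs H {tag 0 i, tag 1 i}) I"
    unfolding T_def by (rule cm_part[OF cm]) (auto simp: tag_inj)
  also have "\<dots> = cs (\<lambda>i. f i + g i) I"
    by (rule cm_cong[OF cm]) (simp add: cm_pair[OF cm] tag_inj H_def untag tag0)
  finally have 1: "cs H T = cs (\<lambda>i. f i + g i) I" .
  define c :: "nat \<Rightarrow> ix" where "c b = (\<lambda>_. b)" for b
  have Tc: "T = (\<Union>j\<in>{c 0, c 1}. tag (j 0) ` I)" unfolding T_def c_def by auto
  have "cs H T = cs (\<lambda>j. cs H (tag (j 0) ` I)) {c 0, c 1}"
    unfolding Tc by (rule cm_part[OF cm]) (auto simp: tag_inj c_def)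
  also have "\<dots> = cs H (tag 0 ` I) + cs H (tag 1 ` I)"
    by (subst cm_pair[OF cm]) (auto simp: c_def dest: fun_cong)
  also have "cs H (tag 0 ` I) = cs f I"
    by (subst cm_reindex[OF cm]) (auto simp: inj_on_def tag_inj H_def untag tag0)
  also have "cs H (tag 1 ` I) = cs g I"
    by (subst cm_reindex[OF cm]) (auto simp: inj_on_def tag_inj H_def untag tag0)
  finally show ?thesis using 1 by simp
qed

lemma esum_cong: assumes cm: "complete_monoid cs" and fg: "\<And>x. x \<in> A \<Longrightarrow> f x = g x"
  shows "esum cs e f A = esum cs e g A"
  unfolding esum_def
proof (rule cm_cong[OF cm])
  fix i assume "i \<in> e ` A"
  hence "inv_into A e i \<in> A" by (rule inv_into_into)
  thus "f (inv_into A e i) = g (inv_into A e i)" by (rule fg)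
qed

lemma esum_zero: assumes cm: "complete_monoid cs" and fg: "\<And>x. x \<in> A \<Longrightarrow> f x = 0"
  shows "esum cs e f A = 0"
proof -
  have "cs (\<lambda>i. f (inv_into A e i)) (e ` A) = 0"
  proof (rule cm_zero[OF cm])
    fix i assume "i \<in> e ` A"
    hence "inv_into A e i \<in> A" by (rule inv_into_into)
    thus "f (inv_into A e i) = 0" by (rule fg)
  qed
  thus ?thesis unfolding esum_def .
qed

lemma esum_empty: "complete_monoid cs \<Longrightarrow> esum cs e f {} = 0"
  unfolding esum_def by (simp add: cm_empty)

lemma esum_single: "complete_monoid cs \<Longrightarrow> esum cs e f {x} = f x"
  unfolding esum_def by (simp add: cm_single)

lemma esum_pair: assumes cm: "complete_monoid cs" and xy: "x \<noteq> y" and ie: "inj_on e {x, y}"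
  shows "esum cs e f {x, y} = f x + f y"
proof -
  have ne: "e x \<noteq> e y" using ie xy by (auto dest: inj_onD)
  have "esum cs e f {x, y} = cs (\<lambda>i. f (inv_into {x, y} e i)) {e x, e y}"
    unfolding esum_def by simp
  also have "\<dots> = f (inv_into {x, y} e (e x)) + f (inv_into {x, y} e (e y))"
    by (rule cm_pair[OF cm ne])
  also have "inv_into {x, y} e (e x) = x" using ie by (simp add: inv_into_f_f)
  also have "inv_into {x, y} e (e y) = y" using ie by (simp add: inv_into_f_f)
  finally show ?thesis .
qed

lemma esum_add: "complete_monoid cs \<Longrightarrow> esum cs e (\<lambda>x. f x + g x) A = esum cs e f A + esum cs e g A"
  unfolding esum_def by (rule cm_add)

lemma esum_bij:
  assumes cm: "complete_monoid cs" and ie: "inj_on e A" and ie': "inj_on e' B"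
    and h: "bij_betw h A B" and fg: "\<And>x. x \<in> A \<Longrightarrow> g (h x) = f x"
  shows "esum cs e f A = esum cs e' g B"
proof -
  define k where "k = (\<lambda>i. e' (h (inv_into A e i)))"
  have hB: "h ` A = B" using h by (simp add: bij_betw_def)
  have ihA: "inj_on h A" using h by (simp add: bij_betw_def)
  have img: "e' ` B = k ` (e ` A)"
    unfolding k_def hB[symmetric] using ie by (auto simp: image_image)
  have ik: "inj_on k (e ` A)"
  proof (rule inj_onI)
    fix a b assume a: "a \<in> e ` A" and b: "b \<in> e ` A" and kk: "k a = k b"
    obtain x where x: "x \<in> A" "a = e x" using a by auto
    obtain y where y: "y \<in> A" "b = e y" using b by auto
    have "e' (h x) = e' (h y)" using kk x y ie by (simp add: k_def)
    hence "h x = h y" using ie' x y hB by (auto dest: inj_onD)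
    hence "x = y" using ihA x y by (auto dest: inj_onD)
    thus "a = b" using x y by simp
  qed
  have "esum cs e' g B = cs (\<lambda>i. g (inv_into B e' i)) (k ` (e ` A))"
    unfolding esum_def img ..
  also have "\<dots> = cs (\<lambda>i. g (inv_into B e' (k i))) (e ` A)"
    by (rule cm_reindex[OF cm ik])
  also have "\<dots> = cs (\<lambda>i. f (inv_into A e i)) (e ` A)"
  proof (rule cm_cong[OF cm])
    fix i assume "i \<in> e ` A"
    then obtain x where x: "x \<in> A" "i = e x" by auto
    have "h x \<in> B" using x hB by auto
    thus "g (inv_into B e' (k i)) = f (inv_into A e i)"
      using x ie ie' fg by (simp add: k_def)
  qed
  finally show ?thesis unfolding esum_def by simp
qed

lemma esum_enc: "complete_monoid cs \<Longrightarrow> inj_on e A \<Longrightarrow> inj_on e' A \<Longrightarrow> esum cs e f A = esum cs e' f A"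
  by (rule esum_bij[where h=id]) auto

lemma esum_reindex: "complete_monoid cs \<Longrightarrow> inj_on e (h ` A) \<Longrightarrow> inj_on e' A \<Longrightarrow> inj_on h A
  \<Longrightarrow> esum cs e f (h ` A) = esum cs e' (\<lambda>x. f (h x)) A"
  by (rule esum_bij[where h=h, symmetric]) (auto simp: bij_betw_def)

lemma esum_UN:
  assumes cm: "complete_monoid cs" and ie: "inj_on e (\<Union>(B ` A))" and ie1: "inj_on e1 A"
    and dj: "\<And>a b. a \<in> A \<Longrightarrow> b \<in> A \<Longrightarrow> a \<noteq> b \<Longrightarrow> B a \<inter> B b = {}"
  shows "esum cs e f (\<Union>a\<in>A. B a) = esum cs e1 (\<lambda>a. esum cs e f (B a)) A"
proof -
  define U where "U = (\<Union>a\<in>A. B a)"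
  define F where "F = (\<lambda>i. f (inv_into U e i))"
  define I where "I = (\<lambda>j. e ` B (inv_into A e1 j))"
  have U: "e ` U = (\<Union>j\<in>e1 ` A. I j)" unfolding U_def I_def using ie1 by auto
  have "cs F (\<Union>j\<in>e1 ` A. I j) = cs (\<lambda>j. cs F (I j)) (e1 ` A)"
  proof (rule cm_part[OF cm])
    fix j j' assume j: "j \<in> e1 ` A" and j': "j' \<in> e1 ` A" and ne: "j \<noteq> j'"
    obtain a where a: "a \<in> A" "j = e1 a" using j by auto
    obtain b where b: "b \<in> A" "j' = e1 b" using j' by auto
    have ab: "a \<noteq> b" using a b ne by auto
    show "I j \<inter> I j' = {}"
    proof (rule ccontr)
      assume "I j \<inter> I j' \<noteq> {}"
      then obtain x y where x: "x \<in> B a" and y: "y \<in> B b" and xy: "e x = e y"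
        using a b ie1 by (auto simp: I_def)
      have "x = y" using ie x y a b xy by (auto dest: inj_onD)
      thus False using dj[OF a(1) b(1) ab] x y by auto
    qed
  qed
  hence "esum cs e f U = cs (\<lambda>j. cs F (I j)) (e1 ` A)" unfolding esum_def F_def[symmetric] U .
  also have "\<dots> = esum cs e1 (\<lambda>a. esum cs e f (B a)) A"
    unfolding esum_def
  proof (rule cm_cong[OF cm])
    fix j assume "j \<in> e1 ` A"
    then obtain a where a: "a \<in> A" "j = e1 a" by auto
    have ia: "inv_into A e1 j = a" using a ie1 by simp
    show "cs F (I j) = cs (\<lambda>i. f (inv_into (B (inv_into A e1 j)) e i)) (e ` B (inv_into A e1 j))"
      unfolding ia I_def
    proof (rule cm_cong[OF cm])
      fix i assume "i \<in> e ` B a"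
      then obtain x where x: "x \<in> B a" "i = e x" by auto
      have xU: "x \<in> U" using x a by (auto simp: U_def)
      have ieB: "inj_on e (B a)" using ie a by (auto intro: inj_on_subset)
      show "F i = f (inv_into (B a) e i)" using x xU ie ieB by (simp add: F_def U_def)
    qed
  qed
  finally show ?thesis unfolding U_def .
qed

lemma esum_Un:
  assumes cm: "complete_monoid cs" and ie: "inj_on e (A \<union> B)" and dj: "A \<inter> B = {}"
  shows "esum cs e f (A \<union> B) = esum cs e f A + esum cs e f B"
proof -
  define c :: "bool \<Rightarrow> ix" where "c b = (\<lambda>_. if b then 1 else 0)" for b
  have ic: "inj_on c X" for X unfolding inj_on_def c_def fun_eq_iff by auto
  define D where "D b = (if b then A else B)" for b
  have U: "A \<union> B = (\<Union>b\<in>{True, False}. D b)" by (auto simp: D_def)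
  have ie2: "inj_on e (\<Union>(D ` {True, False}))" using ie U by simp
  have "esum cs e f (\<Union>b\<in>{True, False}. D b) = esum cs c (\<lambda>b. esum cs e f (D b)) {True, False}"
  proof (rule esum_UN[OF cm ie2 ic])
    fix a b assume "a \<in> {True, False}" "b \<in> {True, False}" "a \<noteq> b"
    thus "D a \<inter> D b = {}" using dj by (cases a; cases b) (auto simp: D_def)
  qed
  also have "\<dots> = esum cs e f (D True) + esum cs e f (D False)"
    by (rule esum_pair[OF cm _ ic]) simp
  finally show ?thesis using U by (simp add: D_def)
qed

lemma esum_finite: assumes cm: "complete_monoid cs" and fin: "finite A"
  shows "inj_on e A \<Longrightarrow> esum cs e f A = sum f A"
  using fin
proof (induction A rule: finite_induct)
  case empty thus ?case by (simp add: esum_empty[OF cm])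
next
  case (insert x A)
  have "esum cs e f (insert x A) = esum cs e f ({x} \<union> A)" by simp
  also have "\<dots> = esum cs e f {x} + esum cs e f A"
    using insert by (intro esum_Un[OF cm]) auto
  also have "\<dots> = f x + sum f A" using insert by (simp add: esum_single[OF cm] inj_on_insert)
  finally show ?case using insert by simp
qed

lemma esum_sum_swap: assumes cm: "complete_monoid cs" and fin: "finite Y"
  shows "esum cs e (\<lambda>x. \<Sum>y\<in>Y. f x y) A = (\<Sum>y\<in>Y. esum cs e (\<lambda>x. f x y) A)"
  using fin
proof (induction Y rule: finite_induct)
  case empty thus ?case by (simp add: esum_zero[OF cm])
next
  case (insert y Y)
  thus ?case by (simp add: esum_add[OF cm])
qed

lemma esum_subset: assumes cm: "complete_monoid cs" and ie: "inj_on e A" and sub: "B \<subseteq> A"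
  and z: "\<And>x. x \<in> A - B \<Longrightarrow> f x = 0"
  shows "esum cs e f A = esum cs e f B"
proof -
  have "A = B \<union> (A - B)" using sub by auto
  hence "esum cs e f A = esum cs e f B + esum cs e f (A - B)"
    using esum_Un[OF cm, of e B "A - B" f] ie by simp
  thus ?thesis using esum_zero[OF cm, of "A - B" f e] z by simp
qed

definition cenc' :: "'c::countable \<Rightarrow> ix" where "cenc' = cenc"

lemma inj_cenc: "inj_on cenc A"
  by (auto simp: inj_on_def cenc_def dest: fun_cong)

lemma inj_senc: "inj_on (senc :: (nat \<Rightarrow> 'c::countable) \<Rightarrow> ix) A"
proof (rule inj_onI)
  fix x y :: "nat \<Rightarrow> 'c" assume "senc x = senc y"
  hence "\<And>k. to_nat (x k) = to_nat (y k)" by (auto simp: senc_def dest: fun_cong)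
  thus "x = y" by auto
qed

lemma Csum_esum: assumes cm: "complete_monoid cs" shows "Csum cs f A = esum cs cenc f A"
  unfolding Csum_def esum_def
proof (rule cm_cong[OF cm])
  fix i assume "i \<in> cenc ` A"
  then obtain x where x: "x \<in> A" "i = cenc x" by auto
  have "from_nat (i 0) = x" using x by (simp add: cenc_def)
  moreover have "inv_into A cenc i = x" using inv_into_f_f[OF inj_cenc x(1)] x(2) by simp
  ultimately show "f (from_nat (i 0)) = f (inv_into A cenc i)" by simp
qed

lemma Ssum_esum: assumes cm: "complete_monoid cs"
  shows "Ssum cs f A = esum cs senc f (A :: (nat \<Rightarrow> 'c::countable) set)"
  unfolding Ssum_def esum_def
proof (rule cm_cong[OF cm])
  fix i assume "i \<in> senc ` A"
  then obtain x where x: "x \<in> A" "i = senc x" by auto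
  have "(\<lambda>k. from_nat (i k) :: 'c) = x" using x by (simp add: senc_def)
  moreover have "inv_into A senc i = x" using inv_into_f_f[OF inj_senc x(1)] x(2) by simp
  ultimately show "f (\<lambda>k. from_nat (i k)) = f (inv_into A senc i)" by simp
qed

lemma esum_Sigma:
  assumes cm: "complete_monoid cs"
  shows "esum cs cenc f (Sigma A B) = esum cs cenc (\<lambda>a. esum cs cenc (\<lambda>b. f (a, b)) (B a)) A"
proof -
  have S: "Sigma A B = (\<Union>a\<in>A. Pair a ` B a)" by auto
  have "esum cs cenc f (\<Union>a\<in>A. Pair a ` B a) = esum cs cenc (\<lambda>a. esum cs cenc f (Pair a ` B a)) A"
    by (rule esum_UN[OF cm inj_cenc inj_cenc]) auto
  hence "esum cs cenc f (Sigma A B) = esum cs cenc (\<lambda>a. esum cs cenc f (Pair a ` B a)) A"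
    unfolding S .
  also have "\<dots> = esum cs cenc (\<lambda>a. esum cs cenc (\<lambda>b. f (a, b)) (B a)) A"
    by (rule esum_cong[OF cm], rule esum_reindex[OF cm inj_cenc inj_cenc]) (simp add: inj_on_def)
  finally show ?thesis .
qed

lemma ssp_D1: assumes "complete_ssp csS csV smult infprod" shows "complete_semiring csS"
  using assms unfolding complete_ssp_def by (elim conjE)

lemma ssp_D2: assumes "complete_ssp csS csV smult infprod" shows "complete_semimodule csS csV smult"
  using assms unfolding complete_ssp_def by (elim conjE)

lemma ssp_D3: assumes "complete_ssp csS csV smult infprod" shows "\<forall>s. infprod s = smult (s 0) (infprod (\<lambda>j. s (Suc j)))"
  using assms unfolding complete_ssp_def by (elim conjE)

lemma sr_D1: assumes "complete_semiring cs" shows "complete_monoid cs"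
  using assms unfolding complete_semiring_def by (elim conjE)

lemma sr_D2: assumes "complete_semiring cs" shows "\<forall>a f I. a * cs f I = cs (\<lambda>i. a * f i) I"
  using assms unfolding complete_semiring_def by (elim conjE)

lemma sm_D1: assumes "complete_semimodule csS csV smult" shows "complete_monoid csV"
  using assms unfolding complete_semimodule_def by (elim conjE)

lemma sm_D2: assumes "complete_semimodule csS csV smult" shows "\<forall>s v w. smult s (v + w) = smult s v + smult s w"
  using assms unfolding complete_semimodule_def by (elim conjE)

lemma sm_D3: assumes "complete_semimodule csS csV smult" shows "\<forall>s t v. smult (s + t) v = smult s v + smult t v"
  using assms unfolding complete_semimodule_def by (elim conjE)

lemma sm_D4: assumes "complete_semimodule csS csV smult" shows "\<forall>s t v. smult (s * t) v = smult s (smult t v)"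
  using assms unfolding complete_semimodule_def by (elim conjE)

lemma sm_D5: assumes "complete_semimodule csS csV smult" shows "\<forall>v. smult 1 v = v"
  using assms unfolding complete_semimodule_def by (elim conjE)

lemma sm_D6: assumes "complete_semimodule csS csV smult" shows "\<forall>v. smult 0 v = 0"
  using assms unfolding complete_semimodule_def by (elim conjE)

lemma sm_D7: assumes "complete_semimodule csS csV smult" shows "\<forall>s. smult s 0 = 0"
  using assms unfolding complete_semimodule_def by (elim conjE)

lemma sm_D8: assumes "complete_semimodule csS csV smult" shows "\<forall>s f I. smult s (csV f I) = csV (\<lambda>i. smult s (f i)) I"
  using assms unfolding complete_semimodule_def by (elim conjE)

lemma sm_D9: assumes "complete_semimodule csS csV smult" shows "\<forall>f I v. smult (csS f I) v = csV (\<lambda>i. smult (f i) v) I"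
  using assms unfolding complete_semimodule_def by (elim conjE)

lemma pd_D2: "pushdown_tm n M \<Longrightarrow> \<forall>p \<pi> \<pi>'. \<forall>i\<in>{1..n}. \<forall>j\<in>{1..n}. M (p # \<pi>') (\<pi> @ \<pi>') i j = M [p] \<pi> i j"
  unfolding pushdown_tm_def by (elim conjE)

lemma pd_D3: "pushdown_tm n M \<Longrightarrow> \<forall>\<pi>1 \<pi>2. (\<nexists>p \<pi> \<pi>'. \<pi>1 = p # \<pi>' \<and> \<pi>2 = \<pi> @ \<pi>') \<longrightarrow>
        (\<forall>i\<in>{1..n}. \<forall>j\<in>{1..n}. M \<pi>1 \<pi>2 i j = 0)"
  unfolding pushdown_tm_def by (elim conjE)

lemma prod_list_zero: "(0::'a::semiring_1) \<in> set xs \<Longrightarrow> prod_list xs = 0"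
  by (induction xs) auto

lemma infinite_shift: "infinite {t. P (t + m)} \<longleftrightarrow> infinite {t::nat. P t}"
proof -
  have s1: "{t. P t} \<subseteq> {..<m} \<union> (\<lambda>t. t + m) ` {t. P (t + m)}"
  proof
    fix t assume "t \<in> {t. P t}"
    thus "t \<in> {..<m} \<union> (\<lambda>t. t + m) ` {t. P (t + m)}"
      by (cases "t < m") (auto intro!: image_eqI[where x="t - m"])
  qed
  have s2: "(\<lambda>t. t + m) ` {t. P (t + m)} \<subseteq> {t. P t}" by auto
  show ?thesis
  proof
    assume "infinite {t. P (t + m)}"
    hence "infinite ((\<lambda>t. t + m) ` {t. P (t + m)})" by (auto dest: finite_imageD simp: inj_on_def)
    thus "infinite {t. P t}" using s2 finite_subset by blast
  next
    assume "infinite {t. P t}"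
    thus "infinite {t. P (t + m)}" using s1 finite_subset by blast
  qed
qed

locale pds =
  fixes csS :: "(ix \<Rightarrow> 's::semiring_1) \<Rightarrow> ix set \<Rightarrow> 's"
    and csV :: "(ix \<Rightarrow> 'v::comm_monoid_add) \<Rightarrow> ix set \<Rightarrow> 'v"
    and smult :: "'s \<Rightarrow> 'v \<Rightarrow> 'v"
    and infprod :: "(nat \<Rightarrow> 's) \<Rightarrow> 'v"
    and n :: nat
    and M :: "'g::finite list \<Rightarrow> 'g list \<Rightarrow> nat \<Rightarrow> nat \<Rightarrow> 's"
  assumes ssp: "complete_ssp csS csV smult infprod"
    and pdm: "pushdown_tm n M"
begin

lemma cmS: "complete_monoid csS" using sr_D1[OF ssp_D1[OF ssp]] .
lemma cmV: "complete_monoid csV" using sm_D1[OF ssp_D2[OF ssp]] .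
lemmas sm_add2 = sm_D2[OF ssp_D2[OF ssp], rule_format]
lemmas sm_add1 = sm_D3[OF ssp_D2[OF ssp], rule_format]
lemmas sm_mult = sm_D4[OF ssp_D2[OF ssp], rule_format]
lemmas sm_one = sm_D5[OF ssp_D2[OF ssp], rule_format]
lemmas sm_zero1 = sm_D6[OF ssp_D2[OF ssp], rule_format]
lemmas sm_zero2 = sm_D7[OF ssp_D2[OF ssp], rule_format]
lemmas ip_step = ssp_D3[OF ssp, rule_format]

lemma S_left: "a * esum csS e f A = esum csS e (\<lambda>x. a * f x) A"
  unfolding esum_def by (rule sr_D2[OF ssp_D1[OF ssp], rule_format])
lemma sm_esumV: "smult s (esum csV e f A) = esum csV e (\<lambda>x. smult s (f x)) A"
  unfolding esum_def by (rule sm_D8[OF ssp_D2[OF ssp], rule_format])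
lemma sm_esumS: "smult (esum csS e f A) v = esum csV e (\<lambda>x. smult (f x) v) A"
  unfolding esum_def by (rule sm_D9[OF ssp_D2[OF ssp], rule_format])

lemma sm_sum1: "smult (sum f A) v = (\<Sum>x\<in>A. smult (f x) v)"
proof (cases "finite A")
  case True thus ?thesis by (induction A rule: finite_induct) (simp_all add: sm_zero1 sm_add1)
next
  case False thus ?thesis by (simp add: sm_zero1)
qed

lemma sm_sum2: "smult s (sum f A) = (\<Sum>x\<in>A. smult s (f x))"
proof (cases "finite A")
  case True thus ?thesis by (induction A rule: finite_induct) (simp_all add: sm_zero2 sm_add2)
next
  case False thus ?thesis by (simp add: sm_zero2)
qed

lemmas pd2 = pd_D2[OF pdm, rule_format]
lemmas pd3 = pd_D3[OF pdm, rule_format]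

lemma M_nil: "i \<in> {1..n} \<Longrightarrow> j \<in> {1..n} \<Longrightarrow> M [] x i j = 0"
  by (rule pd3) auto

lemma M_app: assumes u: "u \<noteq> []" and ij: "i \<in> {1..n}" "j \<in> {1..n}"
  shows "M (u @ w) (u' @ w) i j = M u u' i j"
proof -
  obtain q u0 where uq: "u = q # u0" using u by (cases u) auto
  show ?thesis
  proof (cases "\<exists>\<pi>. u' = \<pi> @ u0")
    case True
    then obtain \<pi> where p: "u' = \<pi> @ u0" by blast
    have "M (u @ w) (u' @ w) i j = M (q # (u0 @ w)) (\<pi> @ (u0 @ w)) i j" by (simp add: uq p)
    also have "\<dots> = M [q] \<pi> i j" using pd2 ij by blast
    also have "\<dots> = M u u' i j" using pd2 ij uq p by metis
    finally show ?thesis .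
  next
    case False
    have 1: "M u u' i j = 0"
      by (rule pd3[OF _ ij]) (use False uq in auto)
    have 2: "M (u @ w) (u' @ w) i j = 0"
    proof (rule pd3[OF _ ij])
      show "\<nexists>p \<pi> \<pi>'. u @ w = p # \<pi>' \<and> u' @ w = \<pi> @ \<pi>'"
      proof
        assume "\<exists>p \<pi> \<pi>'. u @ w = p # \<pi>' \<and> u' @ w = \<pi> @ \<pi>'"
        then obtain p \<pi> \<pi>' where a: "u @ w = p # \<pi>'" "u' @ w = \<pi> @ \<pi>'" by blast
        hence "\<pi>' = u0 @ w" using uq by simp
        hence "u' @ w = (\<pi> @ u0) @ w" using a by simp
        hence "u' = \<pi> @ u0" by simp
        thus False using False by blast
      qed
    qed
    show ?thesis using 1 2 by simp
  qed
qed

lemma M_notapp: assumes u: "u \<noteq> []" and ij: "i \<in> {1..n}" "j \<in> {1..n}"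
  and x: "\<nexists>v. x = v @ w"
  shows "M (u @ w) x i j = 0"
proof (rule pd3[OF _ ij])
  obtain q u0 where uq: "u = q # u0" using u by (cases u) auto
  show "\<nexists>p \<pi> \<pi>'. u @ w = p # \<pi>' \<and> x = \<pi> @ \<pi>'"
  proof
    assume "\<exists>p \<pi> \<pi>'. u @ w = p # \<pi>' \<and> x = \<pi> @ \<pi>'"
    then obtain p \<pi> \<pi>' where a: "u @ w = p # \<pi>'" "x = \<pi> @ \<pi>'" by blast
    hence "\<pi>' = u0 @ w" using uq by simp
    hence "x = (\<pi> @ u0) @ w" using a by simp
    thus False using x by blast
  qed
qed

lemma ip_split: "infprod s = smult (prod_list (map s [0..<m])) (infprod (\<lambda>t. s (t + m)))"
proof (induction m)
  case 0 thus ?case by (simp add: sm_one)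
next
  case (Suc m)
  have "infprod (\<lambda>t. s (t + m)) = smult (s m) (infprod (\<lambda>t. s (t + Suc m)))"
    using ip_step[of "\<lambda>t. s (t + m)"] by simp
  thus ?case using Suc by (simp add: sm_mult)
qed

lemma ip_zero: "s t = 0 \<Longrightarrow> infprod s = 0"
  using ip_split[of s "Suc t"] by (simp add: prod_list_zero sm_zero1)

end

definition valid :: "nat \<Rightarrow> nat \<Rightarrow> (nat \<Rightarrow> 'g list \<times> nat) set" where
  "valid n l = {\<sigma>. (\<forall>t. snd (\<sigma> t) \<in> {1..n}) \<and> infinite {t. snd (\<sigma> t) \<le> l}}"

definition fwt :: "('g list \<Rightarrow> 'g list \<Rightarrow> nat \<Rightarrow> nat \<Rightarrow> 's::semiring_1) \<Rightarrow> 'g list \<Rightarrow> nat \<Rightarrow> ('g list \<times> nat) list \<Rightarrow> 's" where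
  "fwt M \<pi> i \<alpha> = prod_list (map (path_weight M \<pi> i (nth \<alpha>)) [0..<length \<alpha>])"

definition Ls :: "nat \<Rightarrow> nat \<Rightarrow> ('g list \<times> nat) list set" where
  "Ls n m = {\<alpha>. length \<alpha> = m \<and> (\<forall>x\<in>set \<alpha>. snd x \<in> {1..n})}"

definition ep :: "'g list \<Rightarrow> nat \<Rightarrow> ('g list \<times> nat) list \<Rightarrow> 'g list \<times> nat" where
  "ep \<pi> i \<alpha> = (if \<alpha> = [] then (\<pi>, i) else last \<alpha>)"

definition cat :: "('g list \<times> nat) list \<Rightarrow> (nat \<Rightarrow> 'g list \<times> nat) \<Rightarrow> nat \<Rightarrow> 'g list \<times> nat" where
  "cat \<alpha> \<tau> = (\<lambda>t. if t < length \<alpha> then \<alpha> ! t else \<tau> (t - length \<alpha>))"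

lemma pw_cong: "\<sigma> t = \<sigma>' t \<Longrightarrow> (t > 0 \<Longrightarrow> \<sigma> (t - 1) = \<sigma>' (t - 1)) \<Longrightarrow>
   path_weight M \<pi> i \<sigma> t = path_weight M \<pi> i \<sigma>' t"
  unfolding path_weight_def by (cases t) auto

lemma pw_shift: "path_weight M \<pi> i \<sigma> (Suc t) = path_weight M (fst (\<sigma> 0)) (snd (\<sigma> 0)) (\<lambda>t. \<sigma> (Suc t)) t"
  unfolding path_weight_def by (cases t) auto

lemma pw_tail: "path_weight M \<pi> i \<sigma> (t + Suc m) = path_weight M (fst (\<sigma> m)) (snd (\<sigma> m)) (\<lambda>t. \<sigma> (t + Suc m)) t"
  unfolding path_weight_def by (cases t) auto

lemma fwt_Nil: "fwt M \<pi> i [] = 1" by (simp add: fwt_def)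

lemma fwt_Cons: "fwt M \<pi> i (x # \<beta>) = M \<pi> (fst x) i (snd x) * fwt M (fst x) (snd x) \<beta>"
proof -
  have u: "[0..<length (x # \<beta>)] = 0 # map Suc [0..<length \<beta>]"
    by (simp only: length_Cons upt_conv_Cons[OF zero_less_Suc] map_Suc_upt)
  have "map (path_weight M (fst x) (snd x) (nth \<beta>)) [0..<length \<beta>]
      = map (\<lambda>t. path_weight M \<pi> i (nth (x # \<beta>)) (Suc t)) [0..<length \<beta>]"
    by (simp add: pw_shift)
  hence e: "map (path_weight M \<pi> i (nth (x # \<beta>))) (0 # map Suc [0..<length \<beta>])
     = path_weight M \<pi> i (nth (x # \<beta>)) 0 # map (path_weight M (fst x) (snd x) (nth \<beta>)) [0..<length \<beta>]"
    by (simp only: list.map map_map o_def)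
  have z: "path_weight M \<pi> i (nth (x # \<beta>)) 0 = M \<pi> (fst x) i (snd x)" by (simp add: path_weight_def)
  show ?thesis unfolding fwt_def u e z by simp
qed

lemma fwt_prefix: "fwt M \<pi> i (map \<sigma> [0..<m]) = prod_list (map (path_weight M \<pi> i \<sigma>) [0..<m])"
  unfolding fwt_def by (rule arg_cong[where f=prod_list], rule map_cong) (auto intro: pw_cong)

lemma cat_prefix: "map (cat \<alpha> \<tau>) [0..<length \<alpha>] = \<alpha>"
  by (rule nth_equalityI) (auto simp: cat_def)

lemma cat_tail: "(\<lambda>t. cat \<alpha> \<tau> (t + length \<alpha>)) = \<tau>"
  by (auto simp: cat_def)

lemma valid_cat: assumes a: "\<alpha> \<in> Ls n m" shows "cat \<alpha> \<tau> \<in> valid n l \<longleftrightarrow> \<tau> \<in> valid n l"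
proof -
  have len: "length \<alpha> = m" and st: "\<forall>x\<in>set \<alpha>. snd x \<in> {1..n}" using a by (auto simp: Ls_def)
  have 1: "(\<forall>t. snd (cat \<alpha> \<tau> t) \<in> {1..n}) \<longleftrightarrow> (\<forall>t. snd (\<tau> t) \<in> {1..n})"
  proof
    assume h: "\<forall>t. snd (cat \<alpha> \<tau> t) \<in> {1..n}"
    show "\<forall>t. snd (\<tau> t) \<in> {1..n}"
    proof
      fix t show "snd (\<tau> t) \<in> {1..n}" using h[rule_format, of "t + length \<alpha>"] by (simp add: cat_def)
    qed
  next
    assume h: "\<forall>t. snd (\<tau> t) \<in> {1..n}"
    show "\<forall>t. snd (cat \<alpha> \<tau> t) \<in> {1..n}"
    proof
      fix t show "snd (cat \<alpha> \<tau> t) \<in> {1..n}"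
        using h st nth_mem[of t \<alpha>] by (auto simp: cat_def)
    qed
  qed
  have 2: "infinite {t. snd (cat \<alpha> \<tau> t) \<le> l} \<longleftrightarrow> infinite {t. snd (\<tau> t) \<le> l}"
    using infinite_shift[of "\<lambda>t. snd (cat \<alpha> \<tau> t) \<le> l" "length \<alpha>"] by (simp add: cat_def)
  show ?thesis using 1 2 by (simp add: valid_def)
qed

lemma cat_split: "\<sigma> = cat (map \<sigma> [0..<m]) (\<lambda>t. \<sigma> (t + m))"
  by (auto simp: cat_def)

context pds
begin

definition F :: "nat \<Rightarrow> 'g list \<Rightarrow> nat \<Rightarrow> 'v" where
  "F l \<pi> i = momega csV infprod n M l \<pi> i"

lemma F_esum: "F l \<pi> i = esum csV senc (\<lambda>\<sigma>. infprod (path_weight M \<pi> i \<sigma>)) (valid n l)"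
  unfolding F_def momega_def valid_def by (rule Ssum_esum[OF cmV])

lemma weight_split: "infprod (path_weight M \<pi> i (cat \<alpha> \<tau>)) =
   smult (fwt M \<pi> i \<alpha>) (infprod (path_weight M (fst (ep \<pi> i \<alpha>)) (snd (ep \<pi> i \<alpha>)) \<tau>))"
proof (cases "\<alpha> = []")
  case True thus ?thesis by (simp add: cat_def ep_def fwt_Nil sm_one)
next
  case False
  then obtain m where m: "length \<alpha> = Suc m" by (cases \<alpha>) auto
  have "infprod (path_weight M \<pi> i (cat \<alpha> \<tau>)) =
      smult (prod_list (map (path_weight M \<pi> i (cat \<alpha> \<tau>)) [0..<Suc m]))
            (infprod (\<lambda>t. path_weight M \<pi> i (cat \<alpha> \<tau>) (t + Suc m)))"
    by (rule ip_split)
  also have "prod_list (map (path_weight M \<pi> i (cat \<alpha> \<tau>)) [0..<Suc m]) = fwt M \<pi> i \<alpha>"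
    using fwt_prefix[of M \<pi> i "cat \<alpha> \<tau>" "Suc m"] cat_prefix[of \<alpha> \<tau>] m by simp
  also have "(\<lambda>t. path_weight M \<pi> i (cat \<alpha> \<tau>) (t + Suc m)) =
      path_weight M (fst (cat \<alpha> \<tau> m)) (snd (cat \<alpha> \<tau> m)) (\<lambda>t. cat \<alpha> \<tau> (t + Suc m))"
    by (rule ext, rule pw_tail)
  also have "(\<lambda>t. cat \<alpha> \<tau> (t + Suc m)) = \<tau>" using cat_tail[of \<alpha> \<tau>] m by simp
  also have "cat \<alpha> \<tau> m = ep \<pi> i \<alpha>" using m False by (simp add: cat_def ep_def last_conv_nth)
  finally show ?thesis .
qed

lemma prefix_lemma:
  assumes P: "P \<subseteq> Ls n m"
  shows "esum csV senc (\<lambda>\<sigma>. infprod (path_weight M \<pi> i \<sigma>)) {\<sigma> \<in> valid n l. map \<sigma> [0..<m] \<in> P}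
    = esum csV cenc (\<lambda>\<alpha>. smult (fwt M \<pi> i \<alpha>) (F l (fst (ep \<pi> i \<alpha>)) (snd (ep \<pi> i \<alpha>)))) P"
proof -
  have lenP: "\<And>\<alpha>. \<alpha> \<in> P \<Longrightarrow> length \<alpha> = m" using P by (auto simp: Ls_def)
  have U: "{\<sigma> \<in> valid n l. map \<sigma> [0..<m] \<in> P} = (\<Union>\<alpha>\<in>P. cat \<alpha> ` valid n l)"
  proof (rule set_eqI)
    fix \<sigma>
    show "\<sigma> \<in> {\<sigma> \<in> valid n l. map \<sigma> [0..<m] \<in> P} \<longleftrightarrow> \<sigma> \<in> (\<Union>\<alpha>\<in>P. cat \<alpha> ` valid n l)"
    proof
      assume h: "\<sigma> \<in> {\<sigma> \<in> valid n l. map \<sigma> [0..<m] \<in> P}"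
      hence hP: "map \<sigma> [0..<m] \<in> P" and hv: "\<sigma> \<in> valid n l" by auto
      have s: "\<sigma> = cat (map \<sigma> [0..<m]) (\<lambda>t. \<sigma> (t + m))" by (rule cat_split)
      have "(\<lambda>t. \<sigma> (t + m)) \<in> valid n l"
        using valid_cat[of "map \<sigma> [0..<m]" n m "\<lambda>t. \<sigma> (t + m)" l] hP P hv s by auto
      thus "\<sigma> \<in> (\<Union>\<alpha>\<in>P. cat \<alpha> ` valid n l)" using hP s by blast
    next
      assume "\<sigma> \<in> (\<Union>\<alpha>\<in>P. cat \<alpha> ` valid n l)"
      then obtain \<alpha> \<tau> where a: "\<alpha> \<in> P" "\<tau> \<in> valid n l" "\<sigma> = cat \<alpha> \<tau>" by blast
      have "\<sigma> \<in> valid n l" using valid_cat[of \<alpha> n m \<tau> l] a P by auto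
      moreover have "map \<sigma> [0..<m] = \<alpha>" using a cat_prefix[of \<alpha> \<tau>] lenP by simp
      ultimately show "\<sigma> \<in> {\<sigma> \<in> valid n l. map \<sigma> [0..<m] \<in> P}" using a by simp
    qed
  qed
  have "esum csV senc (\<lambda>\<sigma>. infprod (path_weight M \<pi> i \<sigma>)) (\<Union>\<alpha>\<in>P. cat \<alpha> ` valid n l)
     = esum csV cenc (\<lambda>\<alpha>. esum csV senc (\<lambda>\<sigma>. infprod (path_weight M \<pi> i \<sigma>)) (cat \<alpha> ` valid n l)) P"
  proof (rule esum_UN[OF cmV inj_senc inj_cenc])
    fix a b assume ab: "a \<in> P" "b \<in> P" "a \<noteq> b"
    show "cat a ` valid n l \<inter> cat b ` valid n l = {}"
    proof (rule ccontr)
      assume "cat a ` valid n l \<inter> cat b ` valid n l \<noteq> {}"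
      then obtain x y where xy: "cat a x = cat b y" by auto
      have "a = map (cat a x) [0..<m]" using cat_prefix[of a x] lenP[OF ab(1)] by simp
      also have "\<dots> = map (cat b y) [0..<m]" using xy by simp
      also have "\<dots> = b" using cat_prefix[of b y] lenP[OF ab(2)] by simp
      finally show False using ab(3) by simp
    qed
  qed
  also have "\<dots> = esum csV cenc (\<lambda>\<alpha>. smult (fwt M \<pi> i \<alpha>) (F l (fst (ep \<pi> i \<alpha>)) (snd (ep \<pi> i \<alpha>)))) P"
  proof (rule esum_cong[OF cmV])
    fix \<alpha> assume "\<alpha> \<in> P"
    have ic: "inj_on (cat \<alpha>) X" for X
    proof (rule inj_onI)
      fix x y assume "cat \<alpha> x = cat \<alpha> y"
      thus "x = y" using cat_tail[of \<alpha> x] cat_tail[of \<alpha> y] by metis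
    qed
    have "esum csV senc (\<lambda>\<sigma>. infprod (path_weight M \<pi> i \<sigma>)) (cat \<alpha> ` valid n l)
       = esum csV senc (\<lambda>\<tau>. infprod (path_weight M \<pi> i (cat \<alpha> \<tau>))) (valid n l)"
      by (rule esum_reindex[OF cmV inj_senc inj_senc ic])
    also have "\<dots> = esum csV senc (\<lambda>\<tau>. smult (fwt M \<pi> i \<alpha>)
         (infprod (path_weight M (fst (ep \<pi> i \<alpha>)) (snd (ep \<pi> i \<alpha>)) \<tau>))) (valid n l)"
      by (simp only: weight_split)
    also have "\<dots> = smult (fwt M \<pi> i \<alpha>) (F l (fst (ep \<pi> i \<alpha>)) (snd (ep \<pi> i \<alpha>)))"
      by (simp only: F_esum sm_esumV)
    finally show "esum csV senc (\<lambda>\<sigma>. infprod (path_weight M \<pi> i \<sigma>)) (cat \<alpha> ` valid n l)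
       = smult (fwt M \<pi> i \<alpha>) (F l (fst (ep \<pi> i \<alpha>)) (snd (ep \<pi> i \<alpha>)))" .
  qed
  finally show ?thesis unfolding U .
qed

end

definition strip :: "'g list \<Rightarrow> 'g list \<Rightarrow> 'g list" where
  "strip w x = take (length x - length w) x"

lemma strip_app: "strip w (v @ w) = v" by (simp add: strip_def)

lemma ep_Cons: "ep \<pi> i (x # \<beta>) = ep (fst x) (snd x) \<beta>"
  by (cases \<beta>) (auto simp: ep_def)

lemma valid_snd: "(\<And>t. snd (\<sigma> t) = snd (\<sigma>' t)) \<Longrightarrow> \<sigma> \<in> valid n l \<longleftrightarrow> \<sigma>' \<in> valid n l"
  by (simp add: valid_def)

context pds
begin

lemma F_nil: assumes i: "i \<in> {1..n}" shows "F l [] i = 0"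
  unfolding F_esum
proof (rule esum_zero[OF cmV])
  fix \<sigma> :: "nat \<Rightarrow> 'g list \<times> nat" assume "\<sigma> \<in> valid n l"
  hence "snd (\<sigma> 0) \<in> {1..n}" by (simp add: valid_def)
  hence "path_weight M [] i \<sigma> 0 = 0" using i by (simp add: path_weight_def M_nil)
  thus "infprod (path_weight M [] i \<sigma>) = 0" by (rule ip_zero)
qed

lemma one_step: "F l \<pi> i = esum csV cenc (\<lambda>x. smult (M \<pi> (fst x) i (snd x)) (F l (fst x) (snd x))) (UNIV \<times> {1..n})"
proof -
  have V: "valid n l = {\<sigma> :: nat \<Rightarrow> 'g list \<times> nat. \<sigma> \<in> valid n l \<and> map \<sigma> [0..<1] \<in> Ls n 1}"
    by (auto simp: valid_def Ls_def)
  have L1: "Ls n 1 = (\<lambda>x. [x]) ` (UNIV \<times> {1..n} :: ('g list \<times> nat) set)"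
  proof (rule set_eqI)
    fix \<alpha> :: "('g list \<times> nat) list"
    show "\<alpha> \<in> Ls n 1 \<longleftrightarrow> \<alpha> \<in> (\<lambda>x. [x]) ` (UNIV \<times> {1..n})"
      by (cases \<alpha>) (auto simp: Ls_def)
  qed
  have "F l \<pi> i = esum csV senc (\<lambda>\<sigma>. infprod (path_weight M \<pi> i \<sigma>)) {\<sigma> \<in> valid n l. map \<sigma> [0..<1] \<in> Ls n 1}"
    unfolding F_esum using V by simp
  also have "\<dots> = esum csV cenc (\<lambda>\<alpha>. smult (fwt M \<pi> i \<alpha>) (F l (fst (ep \<pi> i \<alpha>)) (snd (ep \<pi> i \<alpha>)))) (Ls n 1)"
    by (rule prefix_lemma) simp
  also have "\<dots> = esum csV cenc (\<lambda>x. smult (fwt M \<pi> i [x]) (F l (fst (ep \<pi> i [x])) (snd (ep \<pi> i [x])))) (UNIV \<times> {1..n})"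
    unfolding L1 by (rule esum_reindex[OF cmV inj_cenc inj_cenc]) (simp add: inj_on_def)
  also have "\<dots> = esum csV cenc (\<lambda>x. smult (M \<pi> (fst x) i (snd x)) (F l (fst x) (snd x))) (UNIV \<times> {1..n})"
    by (simp add: fwt_Cons fwt_Nil ep_def)
  finally show ?thesis .
qed

lemma mpow_paths: "mpow csS n M m \<pi> \<pi>' i j = esum csS cenc (fwt M \<pi> i) {\<alpha> \<in> Ls n m. ep \<pi> i \<alpha> = (\<pi>', j)}"
proof (induction m arbitrary: \<pi> i)
  case 0
  have L0: "Ls n 0 = {[]}" by (auto simp: Ls_def)
  show ?case
  proof (cases "\<pi> = \<pi>' \<and> i = j")
    case True
    hence E: "{\<alpha> \<in> Ls n 0. ep \<pi> i \<alpha> = (\<pi>', j)} = {[]}" by (auto simp: L0 ep_def)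
    show ?thesis unfolding E using True by (simp add: esum_single[OF cmS] fwt_Nil)
  next
    case False
    hence E: "{\<alpha> \<in> Ls n 0. ep \<pi> i \<alpha> = (\<pi>', j)} = {}" by (auto simp: L0 ep_def)
    show ?thesis unfolding E using False by (simp add: esum_empty[OF cmS])
  qed
next
  case (Suc m)
  define S where "S x = {\<beta> \<in> Ls n m. ep (fst x) (snd x) \<beta> = (\<pi>', j)}" for x :: "'g list \<times> nat"
  have "mpow csS n M (Suc m) \<pi> \<pi>' i j
      = esum csS cenc (\<lambda>x. M \<pi> (fst x) i (snd x) * mpow csS n M m (fst x) \<pi>' (snd x) j) (UNIV \<times> {1..n})"
    by (simp add: Csum_esum[OF cmS] case_prod_beta')
  also have "\<dots> = esum csS cenc (\<lambda>x. esum csS cenc (fwt M \<pi> i) (Cons x ` S x)) (UNIV \<times> {1..n})"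
  proof (rule esum_cong[OF cmS])
    fix x :: "'g list \<times> nat"
    have "M \<pi> (fst x) i (snd x) * mpow csS n M m (fst x) \<pi>' (snd x) j
        = M \<pi> (fst x) i (snd x) * esum csS cenc (fwt M (fst x) (snd x)) (S x)"
      by (simp add: Suc.IH S_def)
    also have "\<dots> = esum csS cenc (\<lambda>\<beta>. fwt M \<pi> i (x # \<beta>)) (S x)"
      by (simp add: S_left fwt_Cons)
    also have "\<dots> = esum csS cenc (fwt M \<pi> i) (Cons x ` S x)"
      by (rule esum_reindex[OF cmS inj_cenc inj_cenc, symmetric]) simp
    finally show "M \<pi> (fst x) i (snd x) * mpow csS n M m (fst x) \<pi>' (snd x) j
        = esum csS cenc (fwt M \<pi> i) (Cons x ` S x)" .
  qed
  also have "\<dots> = esum csS cenc (fwt M \<pi> i) (\<Union>x\<in>UNIV \<times> {1..n}. Cons x ` S x)"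
    by (rule esum_UN[OF cmS inj_cenc inj_cenc, symmetric]) auto
  also have "(\<Union>x\<in>UNIV \<times> {1..n}. Cons x ` S x) = {\<alpha> \<in> Ls n (Suc m). ep \<pi> i \<alpha> = (\<pi>', j)}"
  proof (rule set_eqI)
    fix \<alpha> :: "('g list \<times> nat) list"
    show "\<alpha> \<in> (\<Union>x\<in>UNIV \<times> {1..n}. Cons x ` S x) \<longleftrightarrow> \<alpha> \<in> {\<alpha> \<in> Ls n (Suc m). ep \<pi> i \<alpha> = (\<pi>', j)}"
    proof (cases \<alpha>)
      case Nil thus ?thesis by (auto simp: Ls_def)
    next
      case (Cons x \<beta>)
      have "x # \<beta> \<in> (\<Union>y\<in>UNIV \<times> {1..n}. Cons y ` S y) \<longleftrightarrow> x \<in> UNIV \<times> {1..n} \<and> \<beta> \<in> S x"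
        by auto
      thus ?thesis unfolding Cons by (cases x) (auto simp: S_def Ls_def ep_Cons)
    qed
  qed
  finally show ?case .
qed

end

context pds
begin

lemma zfac:
  assumes i: "i \<in> {1..n}" and st: "\<And>s. s \<le> t \<Longrightarrow> snd (\<sigma> s) \<in> {1..n}"
    and nt: "\<nexists>v. fst (\<sigma> t) = v @ w"
    and prev: "\<And>s. s < t \<Longrightarrow> (\<exists>v. fst (\<sigma> s) = v @ w) \<and> fst (\<sigma> s) \<noteq> w"
  shows "path_weight M (q # w) i \<sigma> t = 0"
proof (cases t)
  case 0
  have "M ([q] @ w) (fst (\<sigma> 0)) i (snd (\<sigma> 0)) = 0"
    by (rule M_notapp) (use i st nt 0 in auto)
  thus ?thesis using 0 by (simp add: path_weight_def)
next
  case (Suc t')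
  obtain v where v: "fst (\<sigma> t') = v @ w" using prev[of t'] Suc by auto
  have vne: "v \<noteq> []" using prev[of t'] Suc v by auto
  have "M (v @ w) (fst (\<sigma> t)) (snd (\<sigma> t')) (snd (\<sigma> t)) = 0"
    by (rule M_notapp[OF vne]) (use st Suc nt in auto)
  thus ?thesis using Suc v by (simp add: path_weight_def)
qed

lemma zlift:
  assumes i: "i \<in> {1..n}" and st: "\<And>s. s \<le> t \<Longrightarrow> snd (\<tau> s) \<in> {1..n}"
    and ne: "\<And>s. s < t \<Longrightarrow> fst (\<tau> s) \<noteq> []"
  shows "path_weight M (q # w) i (\<lambda>s. (fst (\<tau> s) @ w, snd (\<tau> s))) t = path_weight M [q] i \<tau> t"
proof (cases t)
  case 0
  have "M ([q] @ w) (fst (\<tau> 0) @ w) i (snd (\<tau> 0)) = M [q] (fst (\<tau> 0)) i (snd (\<tau> 0))"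
    by (rule M_app) (use i st 0 in auto)
  thus ?thesis using 0 by (simp add: path_weight_def)
next
  case (Suc t')
  have "M (fst (\<tau> t') @ w) (fst (\<tau> t) @ w) (snd (\<tau> t')) (snd (\<tau> t)) = M (fst (\<tau> t')) (fst (\<tau> t)) (snd (\<tau> t')) (snd (\<tau> t))"
    by (rule M_app) (use ne st Suc in auto)
  thus ?thesis using Suc by (simp add: path_weight_def)
qed

lemma znil:
  assumes "fst (\<tau> t) = []" "snd (\<tau> t) \<in> {1..n}" "snd (\<tau> (Suc t)) \<in> {1..n}"
  shows "path_weight M \<pi> i \<tau> (Suc t) = 0"
  using assms by (simp add: path_weight_def M_nil)

lemma fwt_zero: "t < length \<alpha> \<Longrightarrow> path_weight M \<pi> i (nth \<alpha>) t = 0 \<Longrightarrow> fwt M \<pi> i \<alpha> = 0"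
  unfolding fwt_def by (rule prod_list_zero) force

lemma least_ex: "\<exists>t::nat. P t \<Longrightarrow> \<exists>t. P t \<and> (\<forall>s<t. \<not> P s)"
  using exists_least_iff by blast

lemma K1:
  assumes i: "i \<in> {1..n}"
  shows "esum csV senc (\<lambda>\<sigma>. infprod (path_weight M (q # w) i \<sigma>)) {\<sigma> \<in> valid n l. \<forall>t. fst (\<sigma> t) \<noteq> w}
       = F l [q] i"
proof -
  define f where "f \<sigma> = infprod (path_weight M (q # w) i \<sigma>)" for \<sigma>
  define g where "g \<tau> = infprod (path_weight M [q] i \<tau>)" for \<tau>
  define Ainf where "Ainf = {\<sigma> \<in> valid n l. \<forall>t. fst (\<sigma> t) \<noteq> w}"
  define Ag where "Ag = {\<sigma> \<in> Ainf. \<forall>t. \<exists>v. fst (\<sigma> t) = v @ w}"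
  define B where "B = {\<tau> \<in> valid n l. \<forall>t. fst (\<tau> t) \<noteq> ([] :: 'g list)}"
  define liftS where "liftS \<tau> = (\<lambda>t. (fst (\<tau> t) @ w, snd (\<tau> t)))" for \<tau> :: "nat \<Rightarrow> 'g list \<times> nat"
  have 1: "esum csV senc f Ainf = esum csV senc f Ag"
  proof (rule esum_subset[OF cmV inj_senc])
    show "Ag \<subseteq> Ainf" by (auto simp: Ag_def)
  next
    fix \<sigma> assume s: "\<sigma> \<in> Ainf - Ag"
    hence "\<exists>t. \<nexists>v. fst (\<sigma> t) = v @ w" by (auto simp: Ag_def)
    then obtain t where t: "\<nexists>v. fst (\<sigma> t) = v @ w" and lt: "\<forall>s<t. \<not> (\<nexists>v. fst (\<sigma> s) = v @ w)"
      using least_ex[of "\<lambda>t. \<nexists>v. fst (\<sigma> t) = v @ w"] by blast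
    have "path_weight M (q # w) i \<sigma> t = 0"
      by (rule zfac[OF i]) (use s t lt in \<open>auto simp: Ainf_def valid_def\<close>)
    thus "f \<sigma> = 0" unfolding f_def by (rule ip_zero)
  qed
  have 2: "F l [q] i = esum csV senc g B"
    unfolding F_esum g_def[symmetric]
  proof (rule esum_subset[OF cmV inj_senc])
    show "B \<subseteq> valid n l" by (auto simp: B_def)
  next
    fix \<tau> assume s: "\<tau> \<in> valid n l - B"
    then obtain t where t: "fst (\<tau> t) = []" by (auto simp: B_def)
    have "path_weight M [q] i \<tau> (Suc t) = 0"
      by (rule znil[where \<tau>=\<tau> and t=t, OF t]) (use s in \<open>auto simp: valid_def\<close>)
    thus "g \<tau> = 0" unfolding g_def by (rule ip_zero)
  qed
  have 3: "esum csV senc g B = esum csV senc f Ag"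
  proof (rule esum_bij[OF cmV inj_senc inj_senc])
    show "bij_betw liftS B Ag"
    proof (rule bij_betw_imageI)
      show "inj_on liftS B"
      proof (rule inj_onI)
        fix x y assume "liftS x = liftS y"
        hence "\<And>t. fst (x t) @ w = fst (y t) @ w \<and> snd (x t) = snd (y t)"
          by (auto simp: liftS_def dest: fun_cong)
        thus "x = y" by (auto simp: prod_eq_iff)
      qed
    next
      show "liftS ` B = Ag"
      proof
        show "liftS ` B \<subseteq> Ag"
        proof
          fix \<sigma> assume "\<sigma> \<in> liftS ` B"
          then obtain \<tau> where \<tau>: "\<tau> \<in> B" "\<sigma> = liftS \<tau>" by blast
          have "\<sigma> \<in> valid n l" using valid_snd[of \<sigma> \<tau> n l] \<tau> by (simp add: liftS_def B_def)
          thus "\<sigma> \<in> Ag" using \<tau> by (auto simp: Ag_def Ainf_def liftS_def B_def)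
        qed
      next
        show "Ag \<subseteq> liftS ` B"
        proof
          fix \<sigma> assume s: "\<sigma> \<in> Ag"
          define \<tau> where "\<tau> = (\<lambda>t. (strip w (fst (\<sigma> t)), snd (\<sigma> t)))"
          have e: "fst (\<sigma> t) = fst (\<tau> t) @ w" for t
          proof -
            obtain v where "fst (\<sigma> t) = v @ w" using s by (auto simp: Ag_def)
            thus ?thesis by (simp add: \<tau>_def strip_app)
          qed
          have "liftS \<tau> = \<sigma>" using e by (auto simp: liftS_def \<tau>_def prod_eq_iff)
          moreover have "\<tau> \<in> B"
          proof -
            have "\<tau> \<in> valid n l" using valid_snd[of \<tau> \<sigma> n l] s by (simp add: \<tau>_def Ag_def Ainf_def)
            moreover have "fst (\<tau> t) \<noteq> []" for t using e[of t] s by (auto simp: Ag_def Ainf_def)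
            ultimately show ?thesis by (simp add: B_def)
          qed
          ultimately show "\<sigma> \<in> liftS ` B" by blast
        qed
      qed
    qed
  next
    fix \<tau> assume \<tau>: "\<tau> \<in> B"
    have "path_weight M (q # w) i (liftS \<tau>) = path_weight M [q] i \<tau>"
    proof
      fix t show "path_weight M (q # w) i (liftS \<tau>) t = path_weight M [q] i \<tau> t"
        unfolding liftS_def by (rule zlift[OF i]) (use \<tau> in \<open>auto simp: B_def valid_def\<close>)
    qed
    thus "f (liftS \<tau>) = g \<tau>" by (simp add: f_def g_def)
  qed
  have ff: "(\<lambda>\<sigma>. infprod (path_weight M (q # w) i \<sigma>)) = f" by (simp add: f_def fun_eq_iff)
  show ?thesis unfolding ff Ainf_def[symmetric] using 1 2 3 by simp
qed


lemma K4:
  assumes i: "i \<in> {1..n}"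
  shows "esum csS cenc (fwt M (q # w) i) {\<alpha> \<in> Ls n (Suc m). fst (\<alpha> ! m) = w \<and> (\<forall>t<m. fst (\<alpha> ! t) \<noteq> w) \<and> snd (\<alpha> ! m) = k}
   = mpow csS n M (Suc m) [q] [] i k"
proof -
  define P where "P = {\<alpha> \<in> Ls n (Suc m). fst (\<alpha> ! m) = w \<and> (\<forall>t<m. fst (\<alpha> ! t) \<noteq> w) \<and> snd (\<alpha> ! m) = k}"
  define Pg where "Pg = {\<alpha> \<in> P. \<forall>t\<le>m. \<exists>v. fst (\<alpha> ! t) = v @ w}"
  define Q where "Q = {\<beta> \<in> Ls n (Suc m). ep [q] i \<beta> = ([], k)}"
  define Qg where "Qg = {\<beta> \<in> Q. \<forall>t<m. fst (\<beta> ! t) \<noteq> []}"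
  define lift where "lift \<beta> = map (\<lambda>x. (fst x @ w, snd x)) \<beta>" for \<beta> :: "('g list \<times> nat) list"
  have 1: "esum csS cenc (fwt M (q # w) i) P = esum csS cenc (fwt M (q # w) i) Pg"
  proof (rule esum_subset[OF cmS inj_cenc])
    show "Pg \<subseteq> P" by (auto simp: Pg_def)
  next
    fix \<alpha> assume a: "\<alpha> \<in> P - Pg"
    have len: "length \<alpha> = Suc m" and st: "\<forall>x\<in>set \<alpha>. snd x \<in> {1..n}"
      and nw: "\<forall>t<m. fst (\<alpha> ! t) \<noteq> w" using a by (auto simp: P_def Ls_def)
    from a obtain t0 where t0: "t0 \<le> m" "\<nexists>v. fst (\<alpha> ! t0) = v @ w" by (auto simp: Pg_def)
    then obtain t where t: "\<nexists>v. fst (\<alpha> ! t) = v @ w" and lt: "\<forall>s<t. \<not> (\<nexists>v. fst (\<alpha> ! s) = v @ w)"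
      using least_ex[of "\<lambda>t. \<nexists>v. fst (\<alpha> ! t) = v @ w"] by blast
    have tm: "t \<le> m"
    proof (rule ccontr)
      assume "\<not> t \<le> m" hence "t0 < t" using t0(1) by simp
      thus False using lt t0(2) by blast
    qed
    have "path_weight M (q # w) i (nth \<alpha>) t = 0"
    proof (rule zfac[OF i])
      fix s assume "s \<le> t" thus "snd (\<alpha> ! s) \<in> {1..n}" using st len tm by auto
    next
      show "\<nexists>v. fst (\<alpha> ! t) = v @ w" by (rule t)
    next
      fix s assume "s < t" thus "(\<exists>v. fst (\<alpha> ! s) = v @ w) \<and> fst (\<alpha> ! s) \<noteq> w"
        using lt nw tm by auto
    qed
    thus "fwt M (q # w) i \<alpha> = 0" by (rule fwt_zero[rotated]) (use len tm in simp)
  qed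
  have 2: "esum csS cenc (fwt M [q] i) Q = esum csS cenc (fwt M [q] i) Qg"
  proof (rule esum_subset[OF cmS inj_cenc])
    show "Qg \<subseteq> Q" by (auto simp: Qg_def)
  next
    fix \<beta> assume b: "\<beta> \<in> Q - Qg"
    have len: "length \<beta> = Suc m" and st: "\<forall>x\<in>set \<beta>. snd x \<in> {1..n}" using b by (auto simp: Q_def Ls_def)
    from b obtain t where t: "t < m" "fst (\<beta> ! t) = []" by (auto simp: Qg_def)
    have "path_weight M [q] i (nth \<beta>) (Suc t) = 0"
      by (rule znil[where \<tau>="nth \<beta>" and t=t, OF t(2)]) (use st len t in auto)
    thus "fwt M [q] i \<beta> = 0" by (rule fwt_zero[rotated]) (use len t in simp)
  qed
  have 3: "esum csS cenc (fwt M [q] i) Qg = esum csS cenc (fwt M (q # w) i) Pg"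
  proof (rule esum_bij[OF cmS inj_cenc inj_cenc])
    show "bij_betw lift Qg Pg"
    proof (rule bij_betw_imageI)
      show "inj_on lift Qg"
      proof (rule inj_onI)
        fix x y assume "lift x = lift y"
        thus "x = y" unfolding lift_def by (rule map_inj_on) (auto simp: inj_on_def prod_eq_iff)
      qed
    next
      show "lift ` Qg = Pg"
      proof
        show "lift ` Qg \<subseteq> Pg"
        proof
          fix \<alpha> assume "\<alpha> \<in> lift ` Qg"
          then obtain \<beta> where b: "\<beta> \<in> Qg" "\<alpha> = lift \<beta>" by blast
          have len: "length \<beta> = Suc m" and st: "\<forall>x\<in>set \<beta>. snd x \<in> {1..n}"
            and e: "ep [q] i \<beta> = ([], k)" and ne: "\<forall>t<m. fst (\<beta> ! t) \<noteq> []"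
            using b by (auto simp: Qg_def Q_def Ls_def)
          have bm: "\<beta> ! m = ([], k)" using e len by (auto simp: ep_def last_conv_nth split: if_splits)
          have "\<alpha> \<in> Ls n (Suc m)" using b len st by (auto simp: Ls_def lift_def)
          moreover have "fst (\<alpha> ! m) = w" "snd (\<alpha> ! m) = k" using b bm len by (auto simp: lift_def)
          moreover have "\<forall>t<m. fst (\<alpha> ! t) \<noteq> w" using b ne len by (auto simp: lift_def)
          moreover have "\<forall>t\<le>m. \<exists>v. fst (\<alpha> ! t) = v @ w" using b len by (auto simp: lift_def)
          ultimately show "\<alpha> \<in> Pg" by (simp add: Pg_def P_def)
        qed
      next
        show "Pg \<subseteq> lift ` Qg"
        proof
          fix \<alpha> assume a: "\<alpha> \<in> Pg"
          have len: "length \<alpha> = Suc m" and st: "\<forall>x\<in>set \<alpha>. snd x \<in> {1..n}"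
            and am: "fst (\<alpha> ! m) = w" "snd (\<alpha> ! m) = k" and nw: "\<forall>t<m. fst (\<alpha> ! t) \<noteq> w"
            and fm: "\<forall>t\<le>m. \<exists>v. fst (\<alpha> ! t) = v @ w"
            using a by (auto simp: Pg_def P_def Ls_def)
          define \<beta> where "\<beta> = map (\<lambda>x. (strip w (fst x), snd x)) \<alpha>"
          have e: "fst (\<alpha> ! t) = fst (\<beta> ! t) @ w" if tl: "t < Suc m" for t
          proof -
            obtain v where "fst (\<alpha> ! t) = v @ w" using fm[rule_format, of t] tl by auto
            thus ?thesis using tl len by (simp add: \<beta>_def strip_app)
          qed
          have "lift \<beta> = \<alpha>"
            by (rule nth_equalityI) (use e len in \<open>auto simp: lift_def \<beta>_def prod_eq_iff\<close>)
          moreover have "\<beta> \<in> Qg"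
          proof -
            have lb: "length \<beta> = Suc m" using len by (simp add: \<beta>_def)
            have "\<beta> \<in> Ls n (Suc m)" using lb st by (auto simp: Ls_def \<beta>_def)
            moreover have "\<beta> ! m = ([], k)"
              using e[of m] am len by (auto simp: \<beta>_def prod_eq_iff)
            hence "ep [q] i \<beta> = ([], k)" using lb by (auto simp: ep_def last_conv_nth)
            moreover have "\<forall>t<m. fst (\<beta> ! t) \<noteq> []" using e nw by force
            ultimately show ?thesis by (simp add: Qg_def Q_def)
          qed
          ultimately show "\<alpha> \<in> lift ` Qg" by blast
        qed
      qed
    qed
  next
    fix \<beta> assume b: "\<beta> \<in> Qg"
    have len: "length \<beta> = Suc m" and st: "\<forall>x\<in>set \<beta>. snd x \<in> {1..n}"
      and ne: "\<forall>t<m. fst (\<beta> ! t) \<noteq> []" using b by (auto simp: Qg_def Q_def Ls_def)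
    have "map (path_weight M (q # w) i (nth (lift \<beta>))) [0..<length (lift \<beta>)]
        = map (path_weight M [q] i (nth \<beta>)) [0..<length \<beta>]"
    proof (rule map_cong)
      show "[0..<length (lift \<beta>)] = [0..<length \<beta>]" by (simp add: lift_def)
    next
      fix t assume "t \<in> set [0..<length \<beta>]"
      hence "t < length \<beta>" by simp
      hence t: "t < Suc m" using len by linarith
      have "path_weight M (q # w) i (nth (lift \<beta>)) t
          = path_weight M (q # w) i (\<lambda>s. (fst (\<beta> ! s) @ w, snd (\<beta> ! s))) t"
        by (rule pw_cong) (use t len in \<open>auto simp: lift_def\<close>)
      also have "\<dots> = path_weight M [q] i (nth \<beta>) t"
        by (rule zlift[OF i]) (use t len st ne in auto)
      finally show "path_weight M (q # w) i (nth (lift \<beta>)) t = path_weight M [q] i (nth \<beta>) t" .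
    qed
    thus "fwt M (q # w) i (lift \<beta>) = fwt M [q] i \<beta>" by (simp add: fwt_def)
  qed
  have 4: "mpow csS n M (Suc m) [q] [] i k = esum csS cenc (fwt M [q] i) Q"
    by (simp only: mpow_paths Q_def)
  show ?thesis unfolding P_def[symmetric] using 1 2 3 4 by simp
qed


lemma mstar_Suc: "mstar csS n M [q] [] i k = esum csS cenc (\<lambda>m. mpow csS n M (Suc m) [q] [] i k) UNIV"
proof -
  have "mstar csS n M [q] [] i k = esum csS cenc (\<lambda>m. mpow csS n M m [q] [] i k) UNIV"
    unfolding mstar_def by (rule Csum_esum[OF cmS])
  also have "\<dots> = esum csS cenc (\<lambda>m. mpow csS n M m [q] [] i k) (Suc ` UNIV)"
  proof (rule esum_subset[OF cmS inj_cenc])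
    show "range Suc \<subseteq> UNIV" by simp
  next
    fix x :: nat assume "x \<in> UNIV - range Suc"
    hence "x = 0" by (cases x) auto
    thus "mpow csS n M x [q] [] i k = 0" by simp
  qed
  also have "\<dots> = esum csS cenc (\<lambda>m. mpow csS n M (Suc m) [q] [] i k) UNIV"
    by (rule esum_reindex[OF cmS inj_cenc inj_cenc]) simp
  finally show ?thesis .
qed

lemma key:
  assumes i: "i \<in> {1..n}"
  shows "F l (q # w) i = F l [q] i + (\<Sum>k\<in>{1..n}. smult (mstar csS n M [q] [] i k) (F l w k))"
proof -
  define f where "f \<sigma> = infprod (path_weight M (q # w) i \<sigma>)" for \<sigma>
  define Ainf where "Ainf = {\<sigma> \<in> valid n l. \<forall>t. fst (\<sigma> t) \<noteq> w}"
  define Pm where "Pm m = {\<alpha> \<in> Ls n (Suc m). fst (\<alpha> ! m) = w \<and> (\<forall>t<m. fst (\<alpha> ! t) \<noteq> w)}" for m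
  define Pk where "Pk m k = {\<alpha> \<in> Ls n (Suc m). fst (\<alpha> ! m) = w \<and> (\<forall>t<m. fst (\<alpha> ! t) \<noteq> w) \<and> snd (\<alpha> ! m) = k}" for m k
  define Am where "Am m = {\<sigma> \<in> valid n l. map \<sigma> [0..<Suc m] \<in> Pm m}" for m
  define E where "E m k = esum csS cenc (fwt M (q # w) i) (Pk m k)" for m k
  have Am_iff: "\<sigma> \<in> Am m \<longleftrightarrow> \<sigma> \<in> valid n l \<and> fst (\<sigma> m) = w \<and> (\<forall>t<m. fst (\<sigma> t) \<noteq> w)" for \<sigma> m
  proof -
    have "\<sigma> \<in> valid n l \<Longrightarrow> map \<sigma> [0..<Suc m] \<in> Ls n (Suc m)"
      by (auto simp: Ls_def valid_def)
    thus ?thesis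
      by (auto simp: Am_def Pm_def nth_append simp del: upt_Suc)
  qed
  have V: "valid n l = Ainf \<union> (\<Union>m. Am m)"
  proof
    show "valid n l \<subseteq> Ainf \<union> (\<Union>m. Am m)"
    proof
      fix \<sigma> :: "nat \<Rightarrow> 'g list \<times> nat" assume s: "\<sigma> \<in> valid n l"
      show "\<sigma> \<in> Ainf \<union> (\<Union>m. Am m)"
      proof (cases "\<exists>t. fst (\<sigma> t) = w")
        case False thus ?thesis using s by (auto simp: Ainf_def)
      next
        case True
        then obtain m where "fst (\<sigma> m) = w" "\<forall>t<m. fst (\<sigma> t) \<noteq> w"
          using least_ex[of "\<lambda>t. fst (\<sigma> t) = w"] by blast
        thus ?thesis using s Am_iff by blast
      qed
    qed
  next
    show "Ainf \<union> (\<Union>m. Am m) \<subseteq> valid n l" using Am_iff by (auto simp: Ainf_def)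
  qed
  have dj1: "Ainf \<inter> (\<Union>m. Am m) = {}" using Am_iff by (auto simp: Ainf_def)
  have "F l (q # w) i = esum csV senc f (Ainf \<union> (\<Union>m. Am m))"
    unfolding F_esum V f_def ..
  also have "\<dots> = esum csV senc f Ainf + esum csV senc f (\<Union>m. Am m)"
    by (rule esum_Un[OF cmV inj_senc dj1])
  also have "esum csV senc f Ainf = F l [q] i"
    unfolding f_def Ainf_def by (rule K1[OF i])
  also have "esum csV senc f (\<Union>m. Am m) = esum csV cenc (\<lambda>m. esum csV senc f (Am m)) UNIV"
  proof (rule esum_UN[OF cmV inj_senc inj_cenc])
    fix a b :: nat assume ab: "a \<noteq> b"
    show "Am a \<inter> Am b = {}"
    proof (rule ccontr)
      assume "Am a \<inter> Am b \<noteq> {}"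
      then obtain \<sigma> where "\<sigma> \<in> Am a" "\<sigma> \<in> Am b" by blast
      hence "fst (\<sigma> a) = w" "fst (\<sigma> b) = w" "\<forall>t<a. fst (\<sigma> t) \<noteq> w" "\<forall>t<b. fst (\<sigma> t) \<noteq> w"
        using Am_iff by auto
      thus False using ab by (metis linorder_neqE_nat)
    qed
  qed
  also have "\<dots> = esum csV cenc (\<lambda>m. \<Sum>k\<in>{1..n}. smult (E m k) (F l w k)) UNIV"
  proof (rule esum_cong[OF cmV])
    fix m
    have "esum csV senc f (Am m) = esum csV cenc (\<lambda>\<alpha>. smult (fwt M (q # w) i \<alpha>)
             (F l (fst (ep (q # w) i \<alpha>)) (snd (ep (q # w) i \<alpha>)))) (Pm m)"
      unfolding f_def Am_def by (rule prefix_lemma) (auto simp: Pm_def)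
    also have "Pm m = (\<Union>k\<in>{1..n}. Pk m k)"
      by (auto simp: Pm_def Pk_def Ls_def)
    also have "esum csV cenc (\<lambda>\<alpha>. smult (fwt M (q # w) i \<alpha>)
             (F l (fst (ep (q # w) i \<alpha>)) (snd (ep (q # w) i \<alpha>)))) (\<Union>k\<in>{1..n}. Pk m k)
        = esum csV cenc (\<lambda>k. esum csV cenc (\<lambda>\<alpha>. smult (fwt M (q # w) i \<alpha>)
             (F l (fst (ep (q # w) i \<alpha>)) (snd (ep (q # w) i \<alpha>)))) (Pk m k)) {1..n}"
      by (rule esum_UN[OF cmV inj_cenc inj_cenc]) (auto simp: Pk_def)
    also have "\<dots> = (\<Sum>k\<in>{1..n}. esum csV cenc (\<lambda>\<alpha>. smult (fwt M (q # w) i \<alpha>)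
             (F l (fst (ep (q # w) i \<alpha>)) (snd (ep (q # w) i \<alpha>)))) (Pk m k))"
      by (rule esum_finite[OF cmV]) (auto simp: inj_cenc)
    also have "\<dots> = (\<Sum>k\<in>{1..n}. smult (E m k) (F l w k))"
    proof (rule sum.cong[OF refl])
      fix k
      have "esum csV cenc (\<lambda>\<alpha>. smult (fwt M (q # w) i \<alpha>)
             (F l (fst (ep (q # w) i \<alpha>)) (snd (ep (q # w) i \<alpha>)))) (Pk m k)
          = esum csV cenc (\<lambda>\<alpha>. smult (fwt M (q # w) i \<alpha>) (F l w k)) (Pk m k)"
      proof (rule esum_cong[OF cmV])
        fix \<alpha> assume a: "\<alpha> \<in> Pk m k"
        hence "length \<alpha> = Suc m" "fst (\<alpha> ! m) = w" "snd (\<alpha> ! m) = k" by (auto simp: Pk_def Ls_def)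
        hence "ep (q # w) i \<alpha> = (w, k)" by (auto simp: ep_def last_conv_nth prod_eq_iff)
        thus "smult (fwt M (q # w) i \<alpha>) (F l (fst (ep (q # w) i \<alpha>)) (snd (ep (q # w) i \<alpha>)))
            = smult (fwt M (q # w) i \<alpha>) (F l w k)" by simp
      qed
      also have "\<dots> = smult (E m k) (F l w k)" by (simp only: E_def sm_esumS)
      finally show "esum csV cenc (\<lambda>\<alpha>. smult (fwt M (q # w) i \<alpha>)
             (F l (fst (ep (q # w) i \<alpha>)) (snd (ep (q # w) i \<alpha>)))) (Pk m k)
          = smult (E m k) (F l w k)" .
    qed
    finally show "esum csV senc f (Am m) = (\<Sum>k\<in>{1..n}. smult (E m k) (F l w k))" .
  qed
  also have "\<dots> = (\<Sum>k\<in>{1..n}. esum csV cenc (\<lambda>m. smult (E m k) (F l w k)) UNIV)"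
    by (rule esum_sum_swap[OF cmV]) simp
  also have "\<dots> = (\<Sum>k\<in>{1..n}. smult (mstar csS n M [q] [] i k) (F l w k))"
  proof (rule sum.cong[OF refl])
    fix k
    have "esum csV cenc (\<lambda>m. smult (E m k) (F l w k)) UNIV = smult (esum csS cenc (\<lambda>m. E m k) UNIV) (F l w k)"
      by (simp only: sm_esumS)
    also have "esum csS cenc (\<lambda>m. E m k) UNIV = mstar csS n M [q] [] i k"
      unfolding mstar_Suc E_def Pk_def by (rule esum_cong[OF cmS], rule K4[OF i])
    finally show "esum csV cenc (\<lambda>m. smult (E m k) (F l w k)) UNIV = smult (mstar csS n M [q] [] i k) (F l w k)" .
  qed
  finally show ?thesis .
qed

end

lemma mprod_Cons: "mprod n (A # As) i k = (\<Sum>k0\<in>{1..n}. A i k0 * mprod n As k0 k)"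
  by (simp add: mprod_def mmul_def)

lemma mprod_Nil: "mprod n [] i k = (if i = k then 1 else 0)"
  by (simp add: mprod_def mone_def)

context pds
begin

lemma stack:
  assumes i: "i \<in> {1..n}"
  shows "F l \<pi> i = (\<Sum>t\<in>{1..length \<pi>}. \<Sum>k\<in>{1..n}.
            smult (mprod n (map (\<lambda>q. mstar csS n M [q] []) (take (t - 1) \<pi>)) i k) (F l [\<pi> ! (t - 1)] k))"
  using i
proof (induction \<pi> arbitrary: i)
  case Nil thus ?case by (simp add: F_nil)
next
  case (Cons q w)
  define Mst where "Mst q = mstar csS n M [q] []" for q
  have Mst_eq: "Mst = (\<lambda>q. mstar csS n M [q] [])" by (rule ext) (simp add: Mst_def)
  define R where "R s = mprod n (map Mst (take (s - 1) w))" for s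
  define X where "X s k' = (\<Sum>k\<in>{1..n}. smult (R s k' k) (F l [w ! (s - 1)] k))" for s k'
  have split: "{1..length (q # w)} = insert 1 (Suc ` {1..length w})"
    by (auto simp: image_iff)
  have t1: "(\<Sum>k\<in>{1..n}. smult (mprod n (map Mst (take (1 - 1) (q # w))) i k) (F l [(q # w) ! (1 - 1)] k))
      = F l [q] i"
  proof -
    have "(\<Sum>k\<in>{1..n}. smult (mprod n (map Mst (take (1 - 1) (q # w))) i k) (F l [(q # w) ! (1 - 1)] k))
        = (\<Sum>k\<in>{1..n}. if i = k then F l [q] k else 0)"
      by (rule sum.cong) (auto simp: mprod_Nil sm_one sm_zero1)
    also have "\<dots> = F l [q] i" using Cons.prems by (simp add: sum.delta)
    finally show ?thesis .
  qed
  have ts: "(\<Sum>k\<in>{1..n}. smult (mprod n (map Mst (take (Suc s - 1) (q # w))) i k) (F l [(q # w) ! (Suc s - 1)] k))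
      = (\<Sum>k'\<in>{1..n}. smult (Mst q i k') (X s k'))" if s: "s \<in> {1..length w}" for s
  proof -
    have tk: "take (Suc s - 1) (q # w) = q # take (s - 1) w" using s by (cases s) auto
    have nth: "(q # w) ! (Suc s - 1) = w ! (s - 1)" using s by (cases s) auto
    have "(\<Sum>k\<in>{1..n}. smult (mprod n (map Mst (take (Suc s - 1) (q # w))) i k) (F l [(q # w) ! (Suc s - 1)] k))
       = (\<Sum>k\<in>{1..n}. smult (\<Sum>k'\<in>{1..n}. Mst q i k' * R s k' k) (F l [w ! (s - 1)] k))"
      unfolding tk nth by (simp add: mprod_Cons R_def)
    also have "\<dots> = (\<Sum>k\<in>{1..n}. \<Sum>k'\<in>{1..n}. smult (Mst q i k') (smult (R s k' k) (F l [w ! (s - 1)] k)))"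
      by (simp add: sm_sum1 sm_mult)
    also have "\<dots> = (\<Sum>k'\<in>{1..n}. \<Sum>k\<in>{1..n}. smult (Mst q i k') (smult (R s k' k) (F l [w ! (s - 1)] k)))"
      by (rule sum.swap)
    also have "\<dots> = (\<Sum>k'\<in>{1..n}. smult (Mst q i k') (X s k'))"
      by (simp add: X_def sm_sum2)
    finally show ?thesis .
  qed
  define g where "g t = (\<Sum>k\<in>{1..n}.
            smult (mprod n (map Mst (take (t - 1) (q # w))) i k) (F l [(q # w) ! (t - 1)] k))" for t
  have "(\<Sum>t\<in>{1..length (q # w)}. g t) = g 1 + (\<Sum>t\<in>Suc ` {1..length w}. g t)"
    unfolding split by (rule sum.insert) auto
  also have "(\<Sum>t\<in>Suc ` {1..length w}. g t) = (\<Sum>s\<in>{1..length w}. g (Suc s))"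
    by (rule sum.reindex_cong[where l=Suc]) auto
  also have "g 1 = F l [q] i" unfolding g_def by (rule t1)
  also have "(\<Sum>s\<in>{1..length w}. g (Suc s)) = (\<Sum>s\<in>{1..length w}. \<Sum>k'\<in>{1..n}. smult (Mst q i k') (X s k'))"
    by (rule sum.cong[OF refl]) (simp only: g_def ts)
  also have "(\<Sum>s\<in>{1..length w}. \<Sum>k'\<in>{1..n}. smult (Mst q i k') (X s k'))
      = (\<Sum>k'\<in>{1..n}. smult (Mst q i k') (\<Sum>s\<in>{1..length w}. X s k'))"
    by (subst sum.swap) (simp add: sm_sum2)
  also have "\<dots> = (\<Sum>k'\<in>{1..n}. smult (Mst q i k') (F l w k'))"
    by (rule sum.cong[OF refl]) (simp add: Cons.IH X_def R_def Mst_eq)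
  finally have "(\<Sum>t\<in>{1..length (q # w)}. g t) = F l (q # w) i"
    using key[OF Cons.prems, of l q w] by (simp only: Mst_def)
  thus ?case unfolding g_def Mst_eq by simp
qed


lemma main:
  assumes i: "i \<in> {1..n}"
  shows "F l [p] i = (\<Sum>p'\<in>(UNIV :: 'g set). \<Sum>k\<in>{1..n}. smult (AM csS n M p p' i k) (F l [p'] k))"
proof -
  define Mst where "Mst q = mstar csS n M [q] []" for q
  have Mst_eq: "Mst = (\<lambda>q. mstar csS n M [q] [])" by (rule ext) (simp add: Mst_def)
  define G where "G x = mprod n (M [p] (fst x) # map Mst (take (snd x - 1) (fst x)))" for x :: "'g list \<times> nat"
  define H where "H x = (\<Sum>k\<in>{1..n}. smult (G x i k) (F l [fst x ! (snd x - 1)] k))" for x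
  define D where "D p' = {(\<pi>, t). \<pi> \<noteq> [] \<and> 1 \<le> t \<and> t \<le> length \<pi> \<and> \<pi> ! (t - 1) = p'}" for p' :: 'g
  have AM_eq: "AM csS n M p p' i k = esum csS cenc (\<lambda>x. G x i k) (D p')" for p' k
    unfolding AM_def Csum_esum[OF cmS] D_def G_def Mst_eq by (simp add: case_prod_beta')
  have "(\<Sum>p'\<in>(UNIV :: 'g set). \<Sum>k\<in>{1..n}. smult (AM csS n M p p' i k) (F l [p'] k))
      = (\<Sum>p'\<in>(UNIV :: 'g set). \<Sum>k\<in>{1..n}. esum csV cenc (\<lambda>x. smult (G x i k) (F l [p'] k)) (D p'))"
    by (simp only: AM_eq sm_esumS)
  also have "\<dots> = (\<Sum>p'\<in>(UNIV :: 'g set). esum csV cenc (\<lambda>x. \<Sum>k\<in>{1..n}. smult (G x i k) (F l [p'] k)) (D p'))"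
    by (rule sum.cong[OF refl], rule esum_sum_swap[OF cmV, symmetric]) simp
  also have "\<dots> = (\<Sum>p'\<in>(UNIV :: 'g set). esum csV cenc H (D p'))"
  proof (rule sum.cong[OF refl], rule esum_cong[OF cmV])
    fix p' x assume "x \<in> D p'"
    hence "fst x ! (snd x - 1) = p'" by (auto simp: D_def)
    thus "(\<Sum>k\<in>{1..n}. smult (G x i k) (F l [p'] k)) = H x" by (simp add: H_def)
  qed
  also have "\<dots> = esum csV cenc (\<lambda>p'. esum csV cenc H (D p')) (UNIV :: 'g set)"
    by (rule esum_finite[OF cmV, symmetric]) (auto simp: inj_cenc)
  also have "\<dots> = esum csV cenc H (\<Union>p'. D p')"
    by (rule esum_UN[OF cmV inj_cenc inj_cenc, symmetric]) (auto simp: D_def)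
  also have "(\<Union>p'. D p') = Sigma UNIV (\<lambda>\<pi>. {1..length \<pi>})"
    by (auto simp: D_def)
  also have "esum csV cenc H (Sigma UNIV (\<lambda>\<pi>. {1..length \<pi>}))
      = esum csV cenc (\<lambda>\<pi>. esum csV cenc (\<lambda>t. H (\<pi>, t)) {1..length \<pi>}) UNIV"
    by (rule esum_Sigma[OF cmV])
  also have "\<dots> = esum csV cenc (\<lambda>\<pi>. \<Sum>t\<in>{1..length \<pi>}. H (\<pi>, t)) UNIV"
    by (rule esum_cong[OF cmV], rule esum_finite[OF cmV]) (auto simp: inj_cenc)
  finally have R: "(\<Sum>p'\<in>(UNIV :: 'g set). \<Sum>k\<in>{1..n}. smult (AM csS n M p p' i k) (F l [p'] k))
      = esum csV cenc (\<lambda>\<pi>. \<Sum>t\<in>{1..length \<pi>}. H (\<pi>, t)) UNIV" .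
  have "F l [p] i = esum csV cenc (\<lambda>x. smult (M [p] (fst x) i (snd x)) (F l (fst x) (snd x))) (Sigma UNIV (\<lambda>_. {1..n}))"
    by (rule one_step)
  also have "\<dots> = esum csV cenc (\<lambda>\<pi>. esum csV cenc (\<lambda>k0. smult (M [p] \<pi> i k0) (F l \<pi> k0)) {1..n}) UNIV"
    by (subst esum_Sigma[OF cmV]) simp
  also have "\<dots> = esum csV cenc (\<lambda>\<pi>. \<Sum>k0\<in>{1..n}. smult (M [p] \<pi> i k0) (F l \<pi> k0)) UNIV"
    by (rule esum_cong[OF cmV], rule esum_finite[OF cmV]) (auto simp: inj_cenc)
  also have "\<dots> = esum csV cenc (\<lambda>\<pi>. \<Sum>t\<in>{1..length \<pi>}. H (\<pi>, t)) UNIV"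
  proof (rule esum_cong[OF cmV])
    fix \<pi> :: "'g list"
    define R where "R t = mprod n (map Mst (take (t - 1) \<pi>))" for t
    define Ft where "Ft t k = F l [\<pi> ! (t - 1)] k" for t k
    define T where "T = {1..length \<pi>}"
    define N where "N = {1..n}"
    define f where "f k0 t k = smult (M [p] \<pi> i k0 * R t k0 k) (Ft t k)" for k0 t k
    have "(\<Sum>k0\<in>{1..n}. smult (M [p] \<pi> i k0) (F l \<pi> k0))
        = (\<Sum>k0\<in>N. smult (M [p] \<pi> i k0) (\<Sum>t\<in>T. \<Sum>k\<in>N. smult (R t k0 k) (Ft t k)))"
      unfolding N_def T_def R_def Ft_def Mst_eq by (rule sum.cong[OF refl]) (simp add: stack)
    also have "\<dots> = (\<Sum>k0\<in>N. \<Sum>t\<in>T. \<Sum>k\<in>N. f k0 t k)"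
      by (simp add: f_def sm_sum2 sm_mult)
    also have "\<dots> = (\<Sum>t\<in>T. \<Sum>k0\<in>N. \<Sum>k\<in>N. f k0 t k)"
      by (rule sum.swap)
    also have "\<dots> = (\<Sum>t\<in>T. \<Sum>k\<in>N. \<Sum>k0\<in>N. f k0 t k)"
      by (rule sum.cong[OF refl], rule sum.swap)
    also have "\<dots> = (\<Sum>t\<in>T. H (\<pi>, t))"
      by (rule sum.cong[OF refl]) (simp add: H_def f_def G_def mprod_Cons sm_sum1 R_def Ft_def N_def)
    finally show "(\<Sum>k0\<in>{1..n}. smult (M [p] \<pi> i k0) (F l \<pi> k0)) = (\<Sum>t\<in>{1..length \<pi>}. H (\<pi>, t))"
      by (simp add: T_def)
  qed
  finally show ?thesis using R by simp
qed

end

theorem theorem6: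
  fixes csS :: "(ix \<Rightarrow> 's::semiring_1) \<Rightarrow> ix set \<Rightarrow> 's"
    and csV :: "(ix \<Rightarrow> 'v::comm_monoid_add) \<Rightarrow> ix set \<Rightarrow> 'v"
    and smult :: "'s \<Rightarrow> 'v \<Rightarrow> 'v"
    and infprod :: "(nat \<Rightarrow> 's) \<Rightarrow> 'v"
    and n :: nat
    and M :: "'g::finite list \<Rightarrow> 'g list \<Rightarrow> nat \<Rightarrow> nat \<Rightarrow> 's"
  assumes "complete_ssp csS csV smult infprod"
    and "n \<ge> 1"
    and "pushdown_tm n M"
  shows "\<forall>p l i. l \<le> n \<longrightarrow> i \<in> {1..n} \<longrightarrow>
           momega csV infprod n M l [p] i =
           (\<Sum>p'\<in>(UNIV :: 'g set). \<Sum>k\<in>{1..n}.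
              smult (AM csS n M p p' i k) (momega csV infprod n M l [p'] k))"
proof -
  interpret pds csS csV smult infprod n M
    using assms(1,3) by unfold_locales
  show ?thesis using main unfolding F_def by blast
qed

end
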